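(* Let $n\ge1$ and let $f\colon[0,1]^n\to\mathbb{R}$ be a Lovász extension. The following are equivalent: (a) $I(f,k)=I(f,1)$ for all $k\in\{1,\ldots,n\}$; (b) the sequence $(\overline{v}_f(s))_{s=0}^n$ is an arithmetic progression; (c) $\overline{m}_f(s)=0$ for $s=2,\ldots,n$.
   Context: $[n]=\{1,\ldots,n\}$; $S_n$ is the symmetric group on $[n]$; for $\pi\in S_n$, $[0,1]^n_\pi=\{\mathbf{x}:x_{\pi(1)}<\cdots<x_{\pi(n)}\}$. A Lovász extension is a continuous function $f\colon[0,1]^n\to\mathbb{R}$ which, on each $[0,1]^n_\pi$, coincides with the unique affine function agreeing with $f$ at the $n+1$ vertices $\mathbf{1}_{\{\pi(i),\ldots,\pi(n)\}}$ ($i=1,\ldots,n+1$), where $\mathbf{1}_S$ is the characteristic vector of $S$. Set $v_f(S)=f(\mathbf{1}_S)$, $m_f(S)=\sum_{T\subseteq S}(-1)^{|S|-|T|}v_f(T)$, $\overline{v}_f(s)=\binom{n}{s}^{-1}\sum_{|S|=s}v_f(S)$ and $\overline{m}_f(s)=\binom{n}{s}^{-1}\sum_{|S|=s}m_f(S)$ for $s\in\{0,\ldots,n\}$. For $\mathbf{x}\in[0,1]^n$, $x_{(1)}\le\cdots\le x_{(n)}$ are its coordinates in ascending order, with $x_{(0)}=0$, $x_{(n+1)}=1$. The influence index is $I(f,k)=-(n+1)(n+2)\int_{[0,1]^n}f(\mathbf{x})\,\big(x_{(k+1)}-2x_{(k)}+x_{(k-1)}\big)\,d\mathbf{x}$.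 *)

theory Defs
  imports "HOL-Analysis.Analysis" "HOL-Library.Multiset"
begin

text \<open>The ground set [n] is the finite index type 'n, with n = CARD('n) (so n \<ge> 1).
  Points of [0,1]^n are vectors x :: real^'n in cbox 0 1.\<close>

definition charvec :: "'n::finite set \<Rightarrow> real^'n" where
  "charvec S = (\<chi> i. if i \<in> S then 1 else 0)"

definition perm_region :: "(nat \<Rightarrow> 'n::finite) \<Rightarrow> (real^'n) set" where
  "perm_region \<pi> = {x \<in> cbox 0 1. \<forall>i j. 1 \<le> i \<longrightarrow> i < j \<longrightarrow> j \<le> CARD('n) \<longrightarrow> x $ \<pi> i < x $ \<pi> j}"

definition lovasz_extension :: "(real^'n::finite \<Rightarrow> real) \<Rightarrow> bool" where
  "lovasz_extension f \<longleftrightarrow>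
     continuous_on (cbox 0 1) f \<and>
     (\<forall>\<pi>. bij_betw \<pi> {1..CARD('n)} (UNIV :: 'n set) \<longrightarrow>
        (\<exists>(c::real) (a::real^'n).
           (\<forall>i\<in>{1..CARD('n)+1}. c + a \<bullet> charvec (\<pi> ` {i..CARD('n)}) = f (charvec (\<pi> ` {i..CARD('n)}))) \<and>
           (\<forall>x\<in>perm_region \<pi>. f x = c + a \<bullet> x)))"

definition vf :: "(real^'n::finite \<Rightarrow> real) \<Rightarrow> 'n set \<Rightarrow> real" where
  "vf f S = f (charvec S)"

definition mf :: "(real^'n::finite \<Rightarrow> real) \<Rightarrow> 'n set \<Rightarrow> real" where
  "mf f S = (\<Sum>T\<in>Pow S. (-1) ^ (card S - card T) * vf f T)"

definition vbar :: "(real^'n::finite \<Rightarrow> real) \<Rightarrow> nat \<Rightarrow> real" where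
  "vbar f s = (\<Sum>S\<in>{S::'n set. card S = s}. vf f S) / real (CARD('n) choose s)"

definition mbar :: "(real^'n::finite \<Rightarrow> real) \<Rightarrow> nat \<Rightarrow> real" where
  "mbar f s = (\<Sum>S\<in>{S::'n set. card S = s}. mf f S) / real (CARD('n) choose s)"

definition order_stat :: "real^'n::finite \<Rightarrow> nat \<Rightarrow> real" where
  "order_stat x k =
     (if k = 0 then 0
      else if k \<le> CARD('n) then sorted_list_of_multiset (image_mset (\<lambda>i. x $ i) (mset_set UNIV)) ! (k - 1)
      else 1)"

definition influence :: "(real^'n::finite \<Rightarrow> real) \<Rightarrow> nat \<Rightarrow> real" where
  "influence f k = - (real CARD('n) + 1) * (real CARD('n) + 2) *
     integral (cbox 0 1) (\<lambda>x. f x * (order_stat x (k+1) - 2 * order_stat x k + order_stat x (k-1)))"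

end

theory Submission
  imports Defs
begin


lemma alt_pow_sum:
  assumes "finite A"
  shows "(\<Sum>X\<in>Pow A. (-1::real) ^ card X) = (if A = {} then 1 else 0)"
  using assms
proof (induction rule: finite_induct)
  case empty then show ?case by simp
next
  case (insert a A)
  have disj: "Pow A \<inter> insert a ` Pow A = {}" using insert by auto
  have inj: "inj_on (insert a) (Pow A)" using insert by (auto simp: inj_on_def)
  have "(\<Sum>X\<in>Pow (insert a A). (-1::real) ^ card X)
      = (\<Sum>X\<in>Pow A. (-1::real) ^ card X) + (\<Sum>X\<in>insert a ` Pow A. (-1::real) ^ card X)"
    unfolding Pow_insert using insert disj by (intro sum.union_disjoint) auto
  also have "(\<Sum>X\<in>insert a ` Pow A. (-1::real) ^ card X) = (\<Sum>X\<in>Pow A. (-1::real) ^ card (insert a X))"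
    using inj by (simp add: sum.reindex)
  also have "\<dots> = (\<Sum>X\<in>Pow A. - ((-1::real) ^ card X))"
  proof (rule sum.cong[OF refl])
    fix X assume "X \<in> Pow A"
    then have "a \<notin> X" "finite X" using insert finite_subset by auto
    then show "(-1::real) ^ card (insert a X) = - ((-1) ^ card X)" by simp
  qed
  finally show ?case by (simp add: sum_negf)
qed

lemma alt_interval_sum:
  fixes R T :: "'a set"
  assumes "finite T" "R \<subseteq> T"
  shows "(\<Sum>S\<in>{S. R \<subseteq> S \<and> S \<subseteq> T}. (-1::real) ^ (card S - card R)) = (if R = T then 1 else 0)"
proof -
  have fR: "finite R" using assms finite_subset by auto
  have bij: "bij_betw (\<lambda>X. R \<union> X) (Pow (T - R)) {S. R \<subseteq> S \<and> S \<subseteq> T}"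
    by (rule bij_betwI[where g = "\<lambda>S. S - R"]) (use assms in auto)
  have "(\<Sum>S\<in>{S. R \<subseteq> S \<and> S \<subseteq> T}. (-1::real) ^ (card S - card R))
       = (\<Sum>X\<in>Pow (T - R). (-1::real) ^ (card (R \<union> X) - card R))"
    using sum.reindex_bij_betw[OF bij, symmetric] by simp
  also have "\<dots> = (\<Sum>X\<in>Pow (T - R). (-1::real) ^ card X)"
  proof (rule sum.cong[OF refl])
    fix X assume X: "X \<in> Pow (T - R)"
    then have "finite X" using assms finite_subset by blast
    moreover have "R \<inter> X = {}" using X by auto
    ultimately have "card (R \<union> X) = card R + card X" using fR card_Un_disjoint by blast
    then show "(-1::real) ^ (card (R \<union> X) - card R) = (-1) ^ card X" by simp
  qed
  also have "\<dots> = (if R = T then 1 else 0)"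
  proof -
    have e: "(T - R = {}) = (R = T)" using assms by auto
    show ?thesis using alt_pow_sum[of "T - R"] assms(1) unfolding e by simp
  qed
  finally show ?thesis .
qed

lemma moebius_inv:
  fixes f :: "real^'n::finite \<Rightarrow> real"
  shows "vf f T = (\<Sum>S\<in>Pow T. mf f S)"
proof -
  have "(\<Sum>S\<in>Pow T. mf f S) = (\<Sum>S\<in>Pow T. \<Sum>R\<in>{R\<in>Pow T. R \<subseteq> S}. (-1) ^ (card S - card R) * vf f R)"
    unfolding mf_def
  proof (rule sum.cong[OF refl])
    fix S assume "S \<in> Pow T"
    then have "Pow S = {R\<in>Pow T. R \<subseteq> S}" by auto
    then show "(\<Sum>R\<in>Pow S. (-1) ^ (card S - card R) * vf f R) = (\<Sum>R\<in>{R\<in>Pow T. R \<subseteq> S}. (-1) ^ (card S - card R) * vf f R)" by simp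
  qed
  also have "\<dots> = (\<Sum>R\<in>Pow T. \<Sum>S\<in>{S\<in>Pow T. R \<subseteq> S}. (-1) ^ (card S - card R) * vf f R)"
    by (rule sum.swap_restrict) auto
  also have "\<dots> = (\<Sum>R\<in>Pow T. (\<Sum>S\<in>{S. R \<subseteq> S \<and> S \<subseteq> T}. (-1::real) ^ (card S - card R)) * vf f R)"
  proof (rule sum.cong[OF refl])
    fix R assume "R \<in> Pow T"
    show "(\<Sum>S\<in>{S\<in>Pow T. R \<subseteq> S}. (-1) ^ (card S - card R) * vf f R) = (\<Sum>S\<in>{S. R \<subseteq> S \<and> S \<subseteq> T}. (-1::real) ^ (card S - card R)) * vf f R"
      by (subst sum_distrib_right, rule sum.cong) auto
  qed
  also have "\<dots> = (\<Sum>R\<in>Pow T. (if R = T then 1 else 0) * vf f R)"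
  proof (rule sum.cong[OF refl])
    fix R assume "R \<in> Pow T"
    then have "R \<subseteq> T" by auto
    then show "(\<Sum>S\<in>{S. R \<subseteq> S \<and> S \<subseteq> T}. (-1::real) ^ (card S - card R)) * vf f R = (if R = T then 1 else 0) * vf f R"
      using alt_interval_sum[of T R] by simp
  qed
  also have "\<dots> = (\<Sum>R\<in>Pow T. if R = T then vf f R else 0)" by (rule sum.cong) auto
  also have "\<dots> = vf f T" by (simp add: sum.delta)
  finally show ?thesis by simp
qed

lemma card_supersets:
  fixes S :: "'n::finite set"
  assumes "card S \<le> t"
  shows "card {T. S \<subseteq> T \<and> card T = t} = (CARD('n) - card S) choose (t - card S)"
proof -
  have bij: "bij_betw (\<lambda>T. T - S) {T. S \<subseteq> T \<and> card T = t} {X. X \<subseteq> - S \<and> card X = t - card S}"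
  proof (rule bij_betwI[where g = "\<lambda>X. X \<union> S"])
    show "(\<lambda>T. T - S) \<in> {T. S \<subseteq> T \<and> card T = t} \<rightarrow> {X. X \<subseteq> - S \<and> card X = t - card S}"
      by (auto simp: card_Diff_subset)
    show "(\<lambda>X. X \<union> S) \<in> {X. X \<subseteq> - S \<and> card X = t - card S} \<rightarrow> {T. S \<subseteq> T \<and> card T = t}"
    proof
      fix X assume X: "X \<in> {X. X \<subseteq> - S \<and> card X = t - card S}"
      then have "card (X \<union> S) = card X + card S" by (intro card_Un_disjoint) auto
      then show "X \<union> S \<in> {T. S \<subseteq> T \<and> card T = t}" using X assms by auto
    qed
  qed auto
  have "card {T. S \<subseteq> T \<and> card T = t} = card {X. X \<subseteq> - S \<and> card X = t - card S}"
    using bij_betw_same_card[OF bij] .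
  also have "\<dots> = card (- S) choose (t - card S)" by (rule n_subsets) simp
  also have "card (- S) = CARD('n) - card S" by (simp add: Compl_eq_Diff_UNIV card_Diff_subset)
  finally show ?thesis .
qed

lemma sum_card_eq:
  fixes f :: "real^'n::finite \<Rightarrow> real"
  shows "(\<Sum>T\<in>{T::'n set. card T = t}. vf f T)
       = (\<Sum>s\<le>t. real ((CARD('n) - s) choose (t - s)) * (\<Sum>S\<in>{S::'n set. card S = s}. mf f S))"
proof -
  define h where "h S = real ((CARD('n) - card S) choose (t - card S)) * mf f S" for S :: "'n set"
  have "(\<Sum>T\<in>{T::'n set. card T = t}. vf f T) = (\<Sum>T\<in>{T::'n set. card T = t}. \<Sum>S\<in>{S\<in>UNIV. S \<subseteq> T}. mf f S)"
  proof (rule sum.cong[OF refl])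
    fix T :: "'n set"
    have "{S\<in>UNIV. S \<subseteq> T} = Pow T" by auto
    then show "vf f T = (\<Sum>S\<in>{S\<in>UNIV. S \<subseteq> T}. mf f S)" using moebius_inv[of f T] by simp
  qed
  also have "\<dots> = (\<Sum>S\<in>(UNIV::'n set set). \<Sum>T\<in>{T\<in>{T::'n set. card T = t}. S \<subseteq> T}. mf f S)"
    by (rule sum.swap_restrict) auto
  also have "\<dots> = (\<Sum>S\<in>(UNIV::'n set set). real (card {T. S \<subseteq> T \<and> card T = t}) * mf f S)"
  proof (rule sum.cong[OF refl])
    fix S :: "'n set"
    have "{T\<in>{T::'n set. card T = t}. S \<subseteq> T} = {T. S \<subseteq> T \<and> card T = t}" by auto
    then show "(\<Sum>T\<in>{T\<in>{T::'n set. card T = t}. S \<subseteq> T}. mf f S) = real (card {T. S \<subseteq> T \<and> card T = t}) * mf f S"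
      by (simp only: sum_constant)
  qed
  also have "\<dots> = (\<Sum>S\<in>{S::'n set. card S \<le> t}. real (card {T. S \<subseteq> T \<and> card T = t}) * mf f S)"
  proof (rule sum.mono_neutral_right)
    show "\<forall>S\<in>UNIV - {S::'n set. card S \<le> t}. real (card {T. S \<subseteq> T \<and> card T = t}) * mf f S = 0"
    proof
      fix S :: "'n set" assume "S \<in> UNIV - {S. card S \<le> t}"
      then have "card S > t" by auto
      have "{T. S \<subseteq> T \<and> card T = t} = {}"
      proof (rule equals0I)
        fix T assume "T \<in> {T. S \<subseteq> T \<and> card T = t}"
        then have "S \<subseteq> T" "card T = t" by auto
        then show False using \<open>card S > t\<close> card_mono[of T S] by simp
      qed
      then show "real (card {T. S \<subseteq> T \<and> card T = t}) * mf f S = 0" by simp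
    qed
  qed auto
  also have "\<dots> = (\<Sum>S\<in>{S::'n set. card S \<le> t}. h S)"
    by (rule sum.cong[OF refl]) (simp add: card_supersets h_def)
  also have "\<dots> = (\<Sum>s\<le>t. \<Sum>S\<in>{S. S \<in> {S::'n set. card S \<le> t} \<and> card S = s}. h S)"
    by (rule sum.group[symmetric]) auto
  also have "\<dots> = (\<Sum>s\<le>t. real ((CARD('n) - s) choose (t - s)) * (\<Sum>S\<in>{S::'n set. card S = s}. mf f S))"
  proof (rule sum.cong[OF refl])
    fix s assume "s \<in> {..t}"
    then have "{S. S \<in> {S::'n set. card S \<le> t} \<and> card S = s} = {S. card S = s}" by auto
    then show "(\<Sum>S\<in>{S. S \<in> {S::'n set. card S \<le> t} \<and> card S = s}. h S) = real ((CARD('n) - s) choose (t - s)) * (\<Sum>S\<in>{S::'n set. card S = s}. mf f S)"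
      by (simp add: h_def sum_distrib_left)
  qed
  finally show ?thesis .
qed

lemma card_sets_card:
  "card {S::'n::finite set. card S = s} = CARD('n) choose s"
  using n_subsets[of "UNIV::'n set" s] by simp

lemma vbar_mbar:
  fixes f :: "real^'n::finite \<Rightarrow> real"
  assumes "t \<le> CARD('n)"
  shows "vbar f t = (\<Sum>s\<le>t. real (t choose s) * mbar f s)"
proof -
  let ?N = "CARD('n)"
  have nz: "real (?N choose t) \<noteq> 0" using assms by simp
  have "vbar f t = (\<Sum>s\<le>t. real ((?N - s) choose (t - s)) * (\<Sum>S\<in>{S::'n set. card S = s}. mf f S)) / real (?N choose t)"
    unfolding vbar_def sum_card_eq ..
  also have "\<dots> = (\<Sum>s\<le>t. real (t choose s) * mbar f s)"
    unfolding sum_divide_distrib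
  proof (rule sum.cong[OF refl])
    fix s assume s: "s \<in> {..t}"
    have c: "real (?N choose s) * real ((?N - s) choose (t - s)) = real (?N choose t) * real (t choose s)"
      using choose_mult[of s t ?N] s assms by (simp flip: of_nat_mult)
    have nzs: "real (?N choose s) \<noteq> 0" using s assms by simp
    show "real ((?N - s) choose (t - s)) * (\<Sum>S\<in>{S::'n set. card S = s}. mf f S) / real (?N choose t)
        = real (t choose s) * mbar f s"
      unfolding mbar_def using nz nzs c
      by (simp add: field_simps)
  qed
  finally show ?thesis .
qed

lemma part_bc:
  fixes f :: "real^'n::finite \<Rightarrow> real"
  shows "(\<exists>a d. \<forall>s\<le>CARD('n). vbar f s = a + d * real s) \<longleftrightarrow> (\<forall>s\<in>{2..CARD('n)}. mbar f s = 0)"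
proof
  assume "\<exists>a d. \<forall>s\<le>CARD('n). vbar f s = a + d * real s"
  then obtain a d where ad: "\<And>s. s \<le> CARD('n) \<Longrightarrow> vbar f s = a + d * real s" by blast
  have v0: "mbar f 0 = a" using ad[of 0] vbar_mbar[of 0 f] by simp
  have v1: "CARD('n) \<ge> 1 \<Longrightarrow> mbar f 1 = d" using ad[of 1] vbar_mbar[of 1 f] v0 by simp
  have "\<forall>j. 2 \<le> j \<longrightarrow> j < s \<longrightarrow> mbar f j = 0" if "s \<le> Suc CARD('n)" for s
    using that
  proof (induction s)
    case 0 then show ?case by simp
  next
    case (Suc s)
    have IH: "\<And>j. 2 \<le> j \<Longrightarrow> j < s \<Longrightarrow> mbar f j = 0" using Suc by auto
    show ?case
    proof (intro allI impI)
      fix j assume j: "2 \<le> j" "j < Suc s"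
      show "mbar f j = 0"
      proof (cases "j < s")
        case True then show ?thesis using IH j by auto
      next
        case False
        then have js: "j = s" using j by simp
        have jN: "j \<le> CARD('n)" using Suc(2) js by simp
        have "vbar f j = (\<Sum>i\<le>j. real (j choose i) * mbar f i)" using vbar_mbar jN by blast
        also have "\<dots> = (\<Sum>i\<in>{0,1}. real (j choose i) * mbar f i) + (\<Sum>i\<in>{2..<j}. real (j choose i) * mbar f i) + real (j choose j) * mbar f j"
        proof -
          let ?g = "\<lambda>i. real (j choose i) * mbar f i"
          have e1: "{..j} = insert j {..<j}" by auto
          have s1: "(\<Sum>i\<le>j. ?g i) = ?g j + (\<Sum>i<j. ?g i)" unfolding e1 by simp
          have e2: "{..<j} = {0,1} \<union> {2..<j}" using j by auto
          have s2: "(\<Sum>i<j. ?g i) = (\<Sum>i\<in>{0,1}. ?g i) + (\<Sum>i\<in>{2..<j}. ?g i)"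
            unfolding e2 by (rule sum.union_disjoint) auto
          show ?thesis using s1 s2 by simp
        qed
        also have "(\<Sum>i\<in>{2..<j}. real (j choose i) * mbar f i) = 0" using IH js by auto
        finally have "vbar f j = a + real j * d + mbar f j" using v0 v1 jN j by simp
        then show ?thesis using ad[OF jN] by (simp add: algebra_simps)
      qed
    qed
  qed
  then have "\<forall>j. 2 \<le> j \<longrightarrow> j < Suc CARD('n) \<longrightarrow> mbar f j = 0" by blast
  then show "\<forall>s\<in>{2..CARD('n)}. mbar f s = 0" by auto
next
  assume H: "\<forall>s\<in>{2..CARD('n)}. mbar f s = 0"
  show "\<exists>a d. \<forall>s\<le>CARD('n). vbar f s = a + d * real s"
  proof (intro exI allI impI)
    fix s assume s: "s \<le> CARD('n)"
    have "vbar f s = (\<Sum>i\<le>s. real (s choose i) * mbar f i)" using vbar_mbar s by blast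
    also have "\<dots> = (\<Sum>i\<in>{..s} \<inter> {0,1}. real (s choose i) * mbar f i)"
      by (rule sum.mono_neutral_right) (use H s in auto)
    also have "\<dots> = mbar f 0 + mbar f 1 * real s"
      by (cases "s = 0") (auto simp: Int_insert_right)
    finally show "vbar f s = mbar f 0 + mbar f 1 * real s" .
  qed
qed


lemma beta_nat_has_integral:
  "((\<lambda>w. w ^ p * (1 - w) ^ q) has_integral (fact p * fact q / fact (p + q + 1))) {0..1::real}"
proof -
  have B: "((\<lambda>t. t powr (real (Suc p) - 1) * (1 - t) powr (real (Suc q) - 1)) has_integral Beta (real (Suc p)) (real (Suc q))) {0..1}"
    by (rule has_integral_Beta_real) auto
  have g1: "Gamma (real (Suc p)) = fact p" using Gamma_fact[of p] by (simp add: add.commute)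
  have g2: "Gamma (real (Suc q)) = fact q" using Gamma_fact[of q] by (simp add: add.commute)
  have g3: "Gamma (real (Suc p) + real (Suc q)) = fact (p + q + 1)"
    using Gamma_fact[of "p+q+1"] by (simp add: algebra_simps)
  have Bv: "Beta (real (Suc p)) (real (Suc q)) = fact p * fact q / fact (p + q + 1)"
    unfolding Beta_def g1 g2 g3 ..
  show ?thesis
  proof (rule has_integral_spike_finite[where S = "{0,1}"])
    show "finite {0::real, 1}" by simp
    show "((\<lambda>t. t powr (real (Suc p) - 1) * (1 - t) powr (real (Suc q) - 1)) has_integral (fact p * fact q / fact (p + q + 1))) {0..1}"
      using B unfolding Bv .
    fix x :: real assume "x \<in> {0..1} - {0, 1}"
    then have x: "0 < x" "x < 1" by auto
    then show "x ^ p * (1 - x) ^ q = x powr (real (Suc p) - 1) * (1 - x) powr (real (Suc q) - 1)"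
      by (simp add: powr_realpow)
  qed
qed

lemma beta_nn:
  "(\<integral>\<^sup>+w. ennreal (w ^ p * (1 - w) ^ q) * indicator {0..1} w \<partial>lborel) = ennreal (fact p * fact q / fact (p + q + 1))"
  by (rule nn_integral_has_integral_lebesgue'[OF _ beta_nat_has_integral]) auto

lemma scaled_beta_nn:
  assumes s: "0 < s"
  shows "(\<integral>\<^sup>+r. ennreal ((s - r) ^ b * r ^ c) * indicator {0..s} r \<partial>lborel)
       = ennreal (s ^ (b + c + 1) * (fact c * fact b / fact (c + b + 1)))"
proof -
  have "(\<integral>\<^sup>+r. ennreal ((s - r) ^ b * r ^ c) * indicator {0..s} r \<partial>lborel)
      = ennreal \<bar>s\<bar> * (\<integral>\<^sup>+w. ennreal ((s - (0 + s * w)) ^ b * (0 + s * w) ^ c) * indicator {0..s} (0 + s * w) \<partial>lborel)"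
    by (rule nn_integral_real_affine) (use s in auto)
  also have "(\<lambda>w. ennreal ((s - (0 + s * w)) ^ b * (0 + s * w) ^ c) * indicator {0..s} (0 + s * w))
           = (\<lambda>w. ennreal (s ^ (b + c)) * (ennreal (w ^ c * (1 - w) ^ b) * indicator {0..1} w))"
  proof
    fix w :: real
    have i: "indicator {0..s} (s * w) = (indicator {0..1} w :: ennreal)"
      using s by (auto simp: indicator_def zero_le_mult_iff)
    show "ennreal ((s - (0 + s * w)) ^ b * (0 + s * w) ^ c) * indicator {0..s} (0 + s * w)
        = ennreal (s ^ (b + c)) * (ennreal (w ^ c * (1 - w) ^ b) * indicator {0..1} w)"
    proof (cases "w \<in> {0..1}")
      case True
      have e: "s - s * w = s * (1 - w)" by (simp add: algebra_simps)
      have "(s - s * w) ^ b * (s * w) ^ c = s ^ (b + c) * (w ^ c * (1 - w) ^ b)"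
        unfolding e power_mult_distrib power_add by (simp add: mult_ac)
      moreover have "0 \<le> w ^ c * (1 - w) ^ b" using True by auto
      ultimately show ?thesis using i s True by (simp add: ennreal_mult' mult.assoc)
    next
      case False then show ?thesis using i by simp
    qed
  qed
  also have "(\<integral>\<^sup>+w. ennreal (s ^ (b + c)) * (ennreal (w ^ c * (1 - w) ^ b) * indicator {0..1} w) \<partial>lborel)
      = ennreal (s ^ (b + c)) * ennreal (fact c * fact b / fact (c + b + 1))"
    by (subst nn_integral_cmult) (auto simp: beta_nn)
  finally show ?thesis using s
    by (simp add: ennreal_mult'[symmetric] mult.assoc power_add)
qed

definition tri :: "nat \<Rightarrow> nat \<Rightarrow> nat \<Rightarrow> real \<Rightarrow> real \<Rightarrow> real" where
  "tri a b c s r = (if 0 < r \<and> r < s \<and> s \<le> 1 then (1 - s) ^ a * (s - r) ^ b * r ^ c else 0)"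

lemma tri_nonneg: "0 \<le> tri a b c s r"
  by (auto simp: tri_def)

lemma tri_inner:
  "(\<integral>\<^sup>+r. ennreal (tri a b c s r) \<partial>lborel)
     = ennreal ((1 - s) ^ a * s ^ (b + c + 1) * (fact c * fact b / fact (c + b + 1))) * indicator {0..1} s"
proof (cases "0 < s \<and> s \<le> 1")
  case True
  then have s: "0 < s" "s \<le> 1" by auto
  have "(\<integral>\<^sup>+r. ennreal (tri a b c s r) \<partial>lborel)
      = (\<integral>\<^sup>+r. ennreal ((1 - s) ^ a) * (ennreal ((s - r) ^ b * r ^ c) * indicator {0..s} r) \<partial>lborel)"
  proof (rule nn_integral_cong_AE)
    have "AE r in lborel. r \<noteq> 0" "AE r in lborel. r \<noteq> s" by (rule AE_lborel_singleton)+
    then show "AE r in lborel. ennreal (tri a b c s r) = ennreal ((1 - s) ^ a) * (ennreal ((s - r) ^ b * r ^ c) * indicator {0..s} r)"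
    proof eventually_elim
      case (elim r)
      show ?case
      proof (cases "0 < r \<and> r < s")
        case True
        then have "0 \<le> (s - r) ^ b * r ^ c" by auto
        moreover have "0 \<le> (1 - s) ^ a" using s by auto
        ultimately show ?thesis using True s by (simp add: tri_def ennreal_mult' mult.assoc)
      next
        case False
        then have "r \<notin> {0..s}" using elim by auto
        moreover have "tri a b c s r = 0" using False by (auto simp: tri_def)
        ultimately show ?thesis by simp
      qed
    qed
  qed
  also have "\<dots> = ennreal ((1 - s) ^ a) * ennreal (s ^ (b + c + 1) * (fact c * fact b / fact (c + b + 1)))"
    by (subst nn_integral_cmult) (auto simp: scaled_beta_nn[OF s(1)])
  also have "\<dots> = ennreal ((1 - s) ^ a * s ^ (b + c + 1) * (fact c * fact b / fact (c + b + 1)))"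
    using s by (simp add: ennreal_mult'[symmetric] mult.assoc)
  finally show ?thesis using s by simp
next
  case False
  then have "\<And>r. tri a b c s r = 0" by (auto simp: tri_def)
  moreover have "s \<noteq> 0 \<Longrightarrow> indicator {0..1} s * x = (0::ennreal)" for x using False by auto
  ultimately show ?thesis by (cases "s = 0") auto
qed

lemma tri_integral:
  "(\<integral>\<^sup>+s. \<integral>\<^sup>+r. ennreal (tri a b c s r) \<partial>lborel \<partial>lborel)
     = ennreal (fact a * fact b * fact c / fact (a + b + c + 2))"
proof -
  have "(\<integral>\<^sup>+s. \<integral>\<^sup>+r. ennreal (tri a b c s r) \<partial>lborel \<partial>lborel)
     = (\<integral>\<^sup>+s. ennreal (fact c * fact b / fact (c + b + 1)) * (ennreal (s ^ (b + c + 1) * (1 - s) ^ a) * indicator {0..1} s) \<partial>lborel)"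
  proof (rule nn_integral_cong)
    fix s :: real
    show "(\<integral>\<^sup>+r. ennreal (tri a b c s r) \<partial>lborel) = ennreal (fact c * fact b / fact (c + b + 1)) * (ennreal (s ^ (b + c + 1) * (1 - s) ^ a) * indicator {0..1} s)"
    proof (cases "s \<in> {0..1}")
      case True
      then have "0 \<le> s ^ (b + c + 1) * (1 - s) ^ a" by auto
      then show ?thesis unfolding tri_inner using True
        by (simp add: ennreal_mult'[symmetric] mult_ac)
    qed (simp add: tri_inner)
  qed
  also have "\<dots> = ennreal (fact c * fact b / fact (c + b + 1)) * (\<integral>\<^sup>+s. ennreal (s ^ (b + c + 1) * (1 - s) ^ a) * indicator {0..1} s \<partial>lborel)"
    by (rule nn_integral_cmult) simp
  also have "\<dots> = ennreal (fact c * fact b / fact (c + b + 1)) * ennreal (fact (b + c + 1) * fact a / fact (b + c + 1 + a + 1))"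
    by (simp only: beta_nn)
  also have "\<dots> = ennreal (fact a * fact b * fact c / fact (a + b + c + 2))"
  proof -
    have i1: "c + b + 1 = b + c + 1" "b + c + 1 + a + 1 = a + b + c + 2" by simp_all
    have F: "fact (b + c + 1) \<noteq> (0::real)" by simp
    have "fact c * fact b / fact (c + b + 1) * (fact (b + c + 1) * fact a / fact (b + c + 1 + a + 1))
        = (fact a * fact b * fact c / fact (a + b + c + 2) :: real)"
    proof -
      have gen: "\<And>x y z w g::real. x \<noteq> 0 \<Longrightarrow> z * y / x * (x * w / g) = w * y * z / g"
        by (simp add: field_simps)
      show ?thesis unfolding i1 by (rule gen[OF F])
    qed
    then show ?thesis by (simp add: ennreal_mult'[symmetric])
  qed
  finally show ?thesis .
qed


definition Sset :: "'n::finite set \<Rightarrow> real^'n \<Rightarrow> real set" where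
  "Sset T x = {s. 0 < s \<and> s \<le> 1 \<and> (\<forall>l. l \<notin> T \<longrightarrow> x$l < s) \<and> (\<forall>l. l \<in> T \<longrightarrow> s \<le> x$l)}"

definition phi :: "'n::finite set \<Rightarrow> real^'n \<Rightarrow> real" where
  "phi T x = measure lborel (Sset T x)"

lemma vec_nth_measurable[measurable (raw)]:
  assumes "f \<in> M \<rightarrow>\<^sub>M borel"
  shows "(\<lambda>\<omega>. (f \<omega> :: real^'n::finite) $ l) \<in> M \<rightarrow>\<^sub>M borel"
proof -
  have "(\<lambda>x::real^'n. x $ l) \<in> borel \<rightarrow>\<^sub>M borel" by measurable
  from measurable_compose[OF assms this] show ?thesis by (simp add: o_def)
qed

lemma pred_Sset[measurable (raw)]:
  assumes [measurable]: "f \<in> M \<rightarrow>\<^sub>M borel" "g \<in> M \<rightarrow>\<^sub>M borel"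
  shows "Measurable.pred M (\<lambda>\<omega>. g \<omega> \<in> Sset T (f \<omega>))"
proof -
  have e: "(\<lambda>\<omega>. g \<omega> \<in> Sset T (f \<omega>)) = (\<lambda>\<omega>. 0 < g \<omega> \<and> g \<omega> \<le> 1 \<and> (\<forall>l\<in>-T. f \<omega> $ l < g \<omega>) \<and> (\<forall>l\<in>T. g \<omega> \<le> f \<omega> $ l))"
    by (auto simp: Sset_def fun_eq_iff)
  show ?thesis unfolding e using assms by measurable
qed

lemma Sset_sets[measurable]: "Sset T x \<in> sets lborel"
proof -
  have "Measurable.pred lborel (\<lambda>s. s \<in> Sset T x)" by measurable
  then show ?thesis by (simp add: pred_def)
qed

lemma Sset_sub: "Sset T x \<subseteq> {0<..1}" by (auto simp: Sset_def)

lemma emeasure_Sset: "emeasure lborel (Sset T x) = ennreal (phi T x)"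
proof -
  have "emeasure lborel (Sset T x) \<le> emeasure lborel {0<..(1::real)}"
    by (rule emeasure_mono[OF Sset_sub]) simp
  then have "emeasure lborel (Sset T x) \<noteq> \<infinity>" by (auto simp: top_unique)
  then show ?thesis by (simp add: phi_def emeasure_eq_ennreal_measure)
qed

lemma phi_nonneg: "0 \<le> phi T x" by (simp add: phi_def)

lemma phi_nn: "ennreal (phi T x) = (\<integral>\<^sup>+s. indicator (Sset T x) s \<partial>lborel)"
  by (simp add: emeasure_Sset[symmetric] nn_integral_indicator[OF Sset_sets])

lemma phi_measurable[measurable]: "phi T \<in> borel_measurable borel"
proof -
  have "(\<lambda>x. \<integral>\<^sup>+s. indicator (Sset T x) s \<partial>lborel) \<in> borel_measurable (lborel :: (real^'a) measure)"
    by measurable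
  then have "(\<lambda>x. enn2real (\<integral>\<^sup>+s. indicator (Sset T x) s \<partial>lborel)) \<in> borel_measurable (lborel :: (real^'a) measure)"
    by measurable
  moreover have "(\<lambda>x. enn2real (\<integral>\<^sup>+s. indicator (Sset T x) s \<partial>lborel)) = phi T"
    by (simp add: fun_eq_iff phi_nn[symmetric] phi_nonneg)
  ultimately show ?thesis by simp
qed

lemma Sset_char: "s \<in> Sset T x \<Longrightarrow> T = {l. s \<le> x$l}"
  by (auto simp: Sset_def not_le)

lemma emeasure_between_box:
  fixes a b :: "real^'n::finite"
  assumes "box a b \<subseteq> S" "S \<subseteq> cbox a b" "S \<in> sets lborel"
  shows "emeasure lborel S = ennreal (\<Prod>i\<in>UNIV. max 0 (b$i - a$i))"
proof (cases "\<forall>i. a$i \<le> b$i")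
  case True
  have eq: "emeasure lborel (box a b) = emeasure lborel (cbox a b)"
    by (simp add: emeasure_lborel_box_eq emeasure_lborel_cbox_eq)
  have "emeasure lborel (box a b) \<le> emeasure lborel S" by (rule emeasure_mono[OF assms(1,3)])
  moreover have "emeasure lborel S \<le> emeasure lborel (cbox a b)" by (rule emeasure_mono[OF assms(2)]) simp
  ultimately have "emeasure lborel S = emeasure lborel (cbox a b)" using eq by (auto intro: antisym)
  also have "\<dots> = ennreal (measure lborel (cbox a b))"
    using emeasure_lborel_cbox_finite[of a b] by (intro emeasure_eq_ennreal_measure) auto
  also have "a \<in> cbox a b" using True by (auto simp: mem_box_cart)
  then have "cbox a b \<noteq> {}" by auto
  then have "measure lborel (cbox a b) = (\<Prod>i\<in>UNIV. b$i - a$i)" by (rule content_cbox_cart)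
  also have "(\<Prod>i\<in>UNIV. b$i - a$i) = (\<Prod>i\<in>UNIV. max 0 (b$i - a$i))"
    using True by (intro prod.cong) auto
  finally show ?thesis .
next
  case False
  then obtain i where i: "b$i < a$i" by (auto simp: not_le)
  then have "cbox a b = {}" by (force simp: mem_box_cart dest: spec[of _ i])
  then have "S = {}" using assms by auto
  moreover have "(\<Prod>i\<in>UNIV. max 0 (b$i - a$i)) = 0"
  proof -
    have "max 0 (b$i - a$i) = 0" using i by simp
    show ?thesis
      apply (rule prod_zero)
       apply simp
      apply (rule bexI[of _ i])
      using \<open>max 0 (b$i - a$i) = 0\<close> by simp_all
  qed
  ultimately show ?thesis by (metis emeasure_empty ennreal_0)
qed


definition Bx :: "'n::finite set \<Rightarrow> 'n set \<Rightarrow> real \<Rightarrow> real \<Rightarrow> (real^'n) set" where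
  "Bx T U s r = {x. x \<in> cbox 0 1 \<and> s \<in> Sset T x \<and> r \<in> Sset U x}"

definition Gf :: "nat \<Rightarrow> nat \<Rightarrow> nat \<Rightarrow> real \<Rightarrow> real \<Rightarrow> real" where
  "Gf t m p s r = (if 0 < s \<and> s \<le> 1 \<and> 0 < r \<and> r \<le> 1 then (1 - max s r)^t * (max 0 (s - r))^m * (min s r)^p else 0)"

lemma Gf_nonneg: "0 \<le> Gf t m p s r"
  by (auto simp: Gf_def)

lemma pred_Bx[measurable (raw)]:
  assumes [measurable]: "f \<in> M \<rightarrow>\<^sub>M borel" "g \<in> M \<rightarrow>\<^sub>M borel" "h \<in> M \<rightarrow>\<^sub>M borel"
  shows "Measurable.pred M (\<lambda>\<omega>. (f \<omega> :: real^'n::finite) \<in> Bx T U (g \<omega>) (h \<omega>))"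
proof -
  have [measurable]: "cbox (0::real^'n) 1 \<in> sets borel" by simp
  have e: "(\<lambda>\<omega>. f \<omega> \<in> Bx T U (g \<omega>) (h \<omega>)) = (\<lambda>\<omega>. f \<omega> \<in> cbox 0 1 \<and> g \<omega> \<in> Sset T (f \<omega>) \<and> h \<omega> \<in> Sset U (f \<omega>))"
    by (auto simp: Bx_def fun_eq_iff)
  show ?thesis unfolding e using assms by measurable
qed

lemma Bx_sets[measurable]: "Bx T U s r \<in> sets lborel"
proof -
  have "Measurable.pred lborel (\<lambda>x. x \<in> Bx T U s r)" by measurable
  then show ?thesis by (simp add: pred_def)
qed

lemma emeasure_Bx:
  fixes T U :: "'n::finite set"
  assumes TU: "T \<subseteq> U"
  shows "emeasure lborel (Bx T U s r) = ennreal (Gf (card T) (card U - card T) (CARD('n) - card U) s r)"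
proof (cases "0 < s \<and> s \<le> 1 \<and> 0 < r \<and> r \<le> 1")
  case False
  then have "Bx T U s r = {}" by (auto simp: Bx_def Sset_def)
  then show ?thesis by (simp only: Gf_def if_not_P[OF False] ennreal_0 emeasure_empty)
next
  case True
  define a :: "real^'n" where "a = (\<chi> l. if l \<in> T then max s r else if l \<in> U then r else 0)"
  define b :: "real^'n" where "b = (\<chi> l. if l \<in> T then 1 else if l \<in> U then s else min s r)"
  have sub1: "box a b \<subseteq> Bx T U s r"
  proof
    fix x assume x: "x \<in> box a b"
    have c: "a$l < x$l \<and> x$l < b$l" for l using x by (simp add: mem_box_cart)
    have "x \<in> cbox 0 1"
    proof -
      have "0 \<le> x$l \<and> x$l \<le> 1" for l
        using c[of l] True by (auto simp: a_def b_def split: if_splits)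
      then show ?thesis by (simp add: mem_box_cart)
    qed
    moreover have "s \<in> Sset T x"
    proof -
      have "l \<notin> T \<Longrightarrow> x$l < s" for l using c[of l] True by (auto simp: a_def b_def split: if_splits)
      moreover have "l \<in> T \<Longrightarrow> s \<le> x$l" for l using c[of l] True by (auto simp: a_def b_def split: if_splits)
      ultimately show ?thesis using True by (simp add: Sset_def)
    qed
    moreover have "r \<in> Sset U x"
    proof -
      have "l \<notin> U \<Longrightarrow> x$l < r" for l using c[of l] True TU by (auto simp: a_def b_def split: if_splits)
      moreover have "l \<in> U \<Longrightarrow> r \<le> x$l" for l using c[of l] True by (auto simp: a_def b_def split: if_splits)
      ultimately show ?thesis using True by (simp add: Sset_def)
    qed
    ultimately show "x \<in> Bx T U s r" by (simp add: Bx_def)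
  qed
  have sub2: "Bx T U s r \<subseteq> cbox a b"
  proof
    fix x assume "x \<in> Bx T U s r"
    then have x: "x \<in> cbox 0 1" "s \<in> Sset T x" "r \<in> Sset U x" by (auto simp: Bx_def)
    have c01: "0 \<le> x$l \<and> x$l \<le> 1" for l using x(1) by (simp add: mem_box_cart)
    have cT: "l \<notin> T \<Longrightarrow> x$l < s" "l \<in> T \<Longrightarrow> s \<le> x$l" for l using x(2) by (auto simp: Sset_def)
    have cU: "l \<notin> U \<Longrightarrow> x$l < r" "l \<in> U \<Longrightarrow> r \<le> x$l" for l using x(3) by (auto simp: Sset_def)
    have "a$l \<le> x$l \<and> x$l \<le> b$l" for l
      using c01[of l] cT[of l] cU[of l] TU by (auto simp: a_def b_def)
    then show "x \<in> cbox a b" by (simp add: mem_box_cart)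
  qed
  have "emeasure lborel (Bx T U s r) = ennreal (\<Prod>l\<in>UNIV. max 0 (b$l - a$l))"
    by (rule emeasure_between_box[OF sub1 sub2 Bx_sets])
  also have "(\<Prod>l\<in>UNIV. max 0 (b$l - a$l)) = Gf (card T) (card U - card T) (CARD('n) - card U) s r"
  proof -
    define h where "h l = max 0 (b$l - a$l)" for l
    have hT: "l \<in> T \<Longrightarrow> h l = 1 - max s r" for l using True by (simp add: h_def a_def b_def)
    have hUT: "l \<in> U - T \<Longrightarrow> h l = max 0 (s - r)" for l by (simp add: h_def a_def b_def)
    have hU: "l \<in> - U \<Longrightarrow> h l = min s r" for l using True TU by (auto simp: h_def a_def b_def)
    have U1: "(UNIV :: 'n set) = (T \<union> (U - T)) \<union> (- U)" using TU by auto
    have "(\<Prod>l\<in>UNIV. h l) = (\<Prod>l\<in>T \<union> (U - T). h l) * (\<Prod>l\<in>- U. h l)"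
      by (subst U1, rule prod.union_disjoint) (use TU in auto)
    also have "(\<Prod>l\<in>T \<union> (U - T). h l) = (\<Prod>l\<in>T. h l) * (\<Prod>l\<in>U - T. h l)"
      by (rule prod.union_disjoint) auto
    also have "(\<Prod>l\<in>T. h l) = (1 - max s r) ^ card T" using hT by simp
    also have "(\<Prod>l\<in>U - T. h l) = (max 0 (s - r)) ^ (card U - card T)"
      using hUT TU by (simp add: card_Diff_subset)
    also have "(\<Prod>l\<in>- U. h l) = (min s r) ^ (CARD('n) - card U)"
      using hU by (simp add: Compl_eq_Diff_UNIV card_Diff_subset)
    finally show ?thesis using True by (simp add: h_def Gf_def)
  qed
  finally show ?thesis .
qed


lemma ind_Bx_measurable[measurable (raw)]:
  assumes [measurable]: "f \<in> M \<rightarrow>\<^sub>M borel" "g \<in> M \<rightarrow>\<^sub>M borel" "h \<in> M \<rightarrow>\<^sub>M borel"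
  shows "(\<lambda>\<omega>. indicator (Bx T U (g \<omega>) (h \<omega>)) (f \<omega> :: real^'n::finite) :: ennreal) \<in> borel_measurable M"
proof -
  have e: "(\<lambda>\<omega>. indicator (Bx T U (g \<omega>) (h \<omega>)) (f \<omega>) :: ennreal) = (\<lambda>\<omega>. if f \<omega> \<in> Bx T U (g \<omega>) (h \<omega>) then 1 else 0)"
    by (auto simp: indicator_def fun_eq_iff)
  show ?thesis unfolding e using assms by measurable
qed

lemma ind_Bx: "(indicator (Bx T U s r) x :: ennreal) = indicator (cbox 0 1) x * indicator (Sset T x) s * indicator (Sset U x) r"
  by (simp add: Bx_def indicator_def)

lemma step_a:
  "ennreal (indicator (cbox 0 1) x * phi T x * phi U x) = (\<integral>\<^sup>+s. \<integral>\<^sup>+r. indicator (Bx T U s r) x \<partial>lborel \<partial>lborel)"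
proof -
  have mT: "indicator (Sset T x) \<in> borel_measurable (lborel :: real measure)" by (rule borel_measurable_indicator[OF Sset_sets])
  have mU: "indicator (Sset U x) \<in> borel_measurable (lborel :: real measure)" by (rule borel_measurable_indicator[OF Sset_sets])
  have "ennreal (indicator (cbox 0 1) x * phi T x * phi U x) = indicator (cbox 0 1) x * ennreal (phi T x) * ennreal (phi U x)"
  proof -
    have i0: "0 \<le> (indicator (cbox 0 1) x :: real)" by (simp add: indicator_def)
    have n1: "0 \<le> indicator (cbox 0 1) x * phi T x" using i0 phi_nonneg[of T x] by (rule mult_nonneg_nonneg)
    show ?thesis
      unfolding ennreal_mult[OF n1 phi_nonneg] ennreal_mult[OF i0 phi_nonneg] ennreal_indicator ..
  qed
  also have "\<dots> = indicator (cbox 0 1) x * (\<integral>\<^sup>+s. indicator (Sset T x) s \<partial>lborel) * (\<integral>\<^sup>+r. indicator (Sset U x) r \<partial>lborel)"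
    by (simp only: phi_nn)
  also have "\<dots> = (\<integral>\<^sup>+s. indicator (cbox 0 1) x * indicator (Sset T x) s \<partial>lborel) * (\<integral>\<^sup>+r. indicator (Sset U x) r \<partial>lborel)"
    by (simp only: nn_integral_cmult[OF mT])
  also have "\<dots> = (\<integral>\<^sup>+s. indicator (cbox 0 1) x * indicator (Sset T x) s * (\<integral>\<^sup>+r. indicator (Sset U x) r \<partial>lborel) \<partial>lborel)"
    by (rule nn_integral_multc[symmetric]) (use mT in simp)
  also have "\<dots> = (\<integral>\<^sup>+s. \<integral>\<^sup>+r. indicator (cbox 0 1) x * indicator (Sset T x) s * indicator (Sset U x) r \<partial>lborel \<partial>lborel)"
    by (rule nn_integral_cong) (simp only: nn_integral_cmult[OF mU])
  also have "\<dots> = (\<integral>\<^sup>+s. \<integral>\<^sup>+r. indicator (Bx T U s r) x \<partial>lborel \<partial>lborel)"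
    by (simp only: ind_Bx)
  finally show ?thesis .
qed

lemma main_nn_G:
  fixes T U :: "'n::finite set"
  assumes TU: "T \<subseteq> U"
  shows "(\<integral>\<^sup>+x. ennreal (indicator (cbox 0 1) x * phi T x * phi U x) \<partial>lborel)
       = (\<integral>\<^sup>+s. \<integral>\<^sup>+r. ennreal (Gf (card T) (card U - card T) (CARD('n) - card U) s r) \<partial>lborel \<partial>lborel)"
proof -
  have "(\<integral>\<^sup>+x. ennreal (indicator (cbox 0 1) x * phi T x * phi U x) \<partial>lborel)
      = (\<integral>\<^sup>+x. \<integral>\<^sup>+s. \<integral>\<^sup>+r. indicator (Bx T U s r) x \<partial>lborel \<partial>lborel \<partial>lborel)"
    by (simp only: step_a)
  also have "\<dots> = (\<integral>\<^sup>+s. \<integral>\<^sup>+x. \<integral>\<^sup>+r. indicator (Bx T U s r) x \<partial>lborel \<partial>lborel \<partial>lborel)"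
  proof -
    have m: "(\<lambda>(x, s). \<integral>\<^sup>+r. indicator (Bx T U s r) x \<partial>lborel) \<in> borel_measurable (lborel \<Otimes>\<^sub>M (lborel::real measure))"
      by measurable
    show ?thesis using lborel_pair.Fubini'[OF m] by simp
  qed
  also have "\<dots> = (\<integral>\<^sup>+s. \<integral>\<^sup>+r. \<integral>\<^sup>+x. indicator (Bx T U s r) x \<partial>lborel \<partial>lborel \<partial>lborel)"
  proof (rule nn_integral_cong)
    fix s :: real
    have m: "(\<lambda>(x, r). indicator (Bx T U s r) x :: ennreal) \<in> borel_measurable (lborel \<Otimes>\<^sub>M (lborel::real measure))"
      by measurable
    show "(\<integral>\<^sup>+x. \<integral>\<^sup>+r. indicator (Bx T U s r) x \<partial>lborel \<partial>lborel) = (\<integral>\<^sup>+r. \<integral>\<^sup>+x. indicator (Bx T U s r) x \<partial>lborel \<partial>lborel)"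
      using lborel_pair.Fubini'[OF m] by simp
  qed
  also have "\<dots> = (\<integral>\<^sup>+s. \<integral>\<^sup>+r. ennreal (Gf (card T) (card U - card T) (CARD('n) - card U) s r) \<partial>lborel \<partial>lborel)"
  proof -
    have "\<And>s r. (\<integral>\<^sup>+x. indicator (Bx T U s r) x \<partial>lborel) = ennreal (Gf (card T) (card U - card T) (CARD('n) - card U) s r)"
      using nn_integral_indicator[OF Bx_sets] emeasure_Bx[OF TU] by metis
    then show ?thesis by simp
  qed
  finally show ?thesis .
qed

lemma tri_measurable[measurable]: "(\<lambda>p. tri a b c (fst p) (snd p)) \<in> borel_measurable (lborel \<Otimes>\<^sub>M lborel)"
  unfolding tri_def by measurable

lemma tri_measurable'[measurable (raw)]:
  assumes [measurable]: "f \<in> M \<rightarrow>\<^sub>M borel" "g \<in> M \<rightarrow>\<^sub>M borel"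
  shows "(\<lambda>\<omega>. tri a b c (f \<omega>) (g \<omega>)) \<in> borel_measurable M"
  unfolding tri_def by measurable

lemma Gf_int_strict:
  assumes "1 \<le> m"
  shows "(\<integral>\<^sup>+s. \<integral>\<^sup>+r. ennreal (Gf t m p s r) \<partial>lborel \<partial>lborel) = ennreal (fact t * fact m * fact p / fact (t + m + p + 2))"
proof -
  have "Gf t m p s r = tri t m p s r" for s r
  proof (cases "r < s")
    case True then show ?thesis by (auto simp: Gf_def tri_def max_def min_def)
  next
    case False
    then have "max 0 (s - r) = 0" by simp
    then show ?thesis using False assms by (auto simp: Gf_def tri_def)
  qed
  then show ?thesis by (simp add: tri_integral)
qed

lemma Gf_int_eq:
  "(\<integral>\<^sup>+s. \<integral>\<^sup>+r. ennreal (Gf t 0 p s r) \<partial>lborel \<partial>lborel) = ennreal (2 * fact t * fact p / fact (t + p + 2))"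
proof -
  have pw: "r \<noteq> s \<Longrightarrow> Gf t 0 p s r = tri t 0 p s r + tri t 0 p r s" for s r
    by (cases "r < s") (auto simp: Gf_def tri_def max_def min_def)
  have "(\<integral>\<^sup>+s. \<integral>\<^sup>+r. ennreal (Gf t 0 p s r) \<partial>lborel \<partial>lborel)
      = (\<integral>\<^sup>+s. (\<integral>\<^sup>+r. ennreal (tri t 0 p s r) \<partial>lborel) + (\<integral>\<^sup>+r. ennreal (tri t 0 p r s) \<partial>lborel) \<partial>lborel)"
  proof (rule nn_integral_cong)
    fix s :: real
    have "(\<integral>\<^sup>+r. ennreal (Gf t 0 p s r) \<partial>lborel) = (\<integral>\<^sup>+r. ennreal (tri t 0 p s r) + ennreal (tri t 0 p r s) \<partial>lborel)"
    proof (rule nn_integral_cong_AE)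
      have "AE r in lborel. r \<noteq> s" by (rule AE_lborel_singleton)
      then show "AE r in lborel. ennreal (Gf t 0 p s r) = ennreal (tri t 0 p s r) + ennreal (tri t 0 p r s)"
        by eventually_elim (simp add: pw tri_nonneg)
    qed
    also have "\<dots> = (\<integral>\<^sup>+r. ennreal (tri t 0 p s r) \<partial>lborel) + (\<integral>\<^sup>+r. ennreal (tri t 0 p r s) \<partial>lborel)"
    proof (rule nn_integral_add)
      show "(\<lambda>r. ennreal (tri t 0 p s r)) \<in> borel_measurable lborel" by measurable
      show "(\<lambda>r. ennreal (tri t 0 p r s)) \<in> borel_measurable lborel" by measurable
    qed
    finally show "(\<integral>\<^sup>+r. ennreal (Gf t 0 p s r) \<partial>lborel) = (\<integral>\<^sup>+r. ennreal (tri t 0 p s r) \<partial>lborel) + (\<integral>\<^sup>+r. ennreal (tri t 0 p r s) \<partial>lborel)" .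
  qed
  also have "\<dots> = (\<integral>\<^sup>+s. \<integral>\<^sup>+r. ennreal (tri t 0 p s r) \<partial>lborel \<partial>lborel) + (\<integral>\<^sup>+s. \<integral>\<^sup>+r. ennreal (tri t 0 p r s) \<partial>lborel \<partial>lborel)"
  proof (rule nn_integral_add)
    have m1: "(\<lambda>(s, r). ennreal (tri t 0 p s r)) \<in> borel_measurable (lborel \<Otimes>\<^sub>M (lborel::real measure))"
      by measurable
    have m2: "(\<lambda>(s, r). ennreal (tri t 0 p r s)) \<in> borel_measurable (lborel \<Otimes>\<^sub>M (lborel::real measure))"
      by measurable
    show "(\<lambda>s. \<integral>\<^sup>+r. ennreal (tri t 0 p s r) \<partial>lborel) \<in> borel_measurable lborel"
      using lborel.borel_measurable_nn_integral[OF m1] .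
    show "(\<lambda>s. \<integral>\<^sup>+r. ennreal (tri t 0 p r s) \<partial>lborel) \<in> borel_measurable lborel"
      using lborel.borel_measurable_nn_integral[OF m2] .
  qed
  also have "\<dots> = ennreal (fact t * fact 0 * fact p / fact (t + 0 + p + 2)) + ennreal (fact t * fact 0 * fact p / fact (t + 0 + p + 2))"
  proof -
    have I1: "(\<integral>\<^sup>+s. \<integral>\<^sup>+r. ennreal (tri t 0 p s r) \<partial>lborel \<partial>lborel) = ennreal (fact t * fact 0 * fact p / fact (t + 0 + p + 2))"
      by (rule tri_integral)
    have "(\<integral>\<^sup>+s. \<integral>\<^sup>+r. ennreal (tri t 0 p r s) \<partial>lborel \<partial>lborel) = (\<integral>\<^sup>+r. \<integral>\<^sup>+s. ennreal (tri t 0 p r s) \<partial>lborel \<partial>lborel)"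
    proof -
      have m: "(\<lambda>(r, s). ennreal (tri t 0 p r s)) \<in> borel_measurable (lborel \<Otimes>\<^sub>M (lborel::real measure))"
        by measurable
      show ?thesis using lborel_pair.Fubini'[OF m] by simp
    qed
    also have "\<dots> = ennreal (fact t * fact 0 * fact p / fact (t + 0 + p + 2))"
      by (rule tri_integral)
    finally show ?thesis using I1 by simp
  qed
  also have "\<dots> = ennreal (2 * fact t * fact p / fact (t + p + 2))"
  proof -
    have "0 \<le> fact t * fact 0 * fact p / (fact (t + 0 + p + 2) :: real)" by simp
    then have "ennreal (fact t * fact 0 * fact p / fact (t + 0 + p + 2)) + ennreal (fact t * fact 0 * fact p / fact (t + 0 + p + 2))
       = ennreal (fact t * fact 0 * fact p / fact (t + 0 + p + 2) + fact t * fact 0 * fact p / fact (t + 0 + p + 2))"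
      by (simp only: ennreal_plus)
    also have "fact t * fact 0 * fact p / fact (t + 0 + p + 2) + fact t * fact 0 * fact p / fact (t + 0 + p + 2) = (2 * fact t * fact p / fact (t + p + 2) :: real)"
    proof -
      have e: "t + 0 + p + 2 = t + p + 2" by simp
      have gen: "\<And>a b g::real. a * 1 * b / g + a * 1 * b / g = 2 * a * b / g" by (simp add: field_simps)
      show ?thesis unfolding e fact_0 by (rule gen)
    qed
    finally show ?thesis .
  qed
  finally show ?thesis .
qed


definition Pv :: "nat \<Rightarrow> nat \<Rightarrow> nat \<Rightarrow> bool \<Rightarrow> real" where
  "Pv N t u e = (if e then 2 else 1) * fact t * fact (u - t) * fact (N - u) / fact (N + 2)"

lemma Pv_nonneg: "0 \<le> Pv N t u e" by (simp add: Pv_def)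

lemma phi_prod_nn:
  fixes T U :: "'n::finite set"
  assumes TU: "T \<subseteq> U"
  shows "(\<integral>\<^sup>+x. ennreal (indicator (cbox 0 1) x * phi T x * phi U x) \<partial>lborel) = ennreal (Pv CARD('n) (card T) (card U) (T = U))"
proof -
  have cU: "card U \<le> CARD('n)" by (rule card_mono) auto
  have cT: "card T \<le> card U" by (rule card_mono[OF _ TU]) simp
  show ?thesis
  proof (cases "T = U")
    case True
    have e: "card T + (CARD('n) - card T) + 2 = CARD('n) + 2" using cU True by simp
    have G: "(\<integral>\<^sup>+s. \<integral>\<^sup>+r. ennreal (Gf (card T) 0 (CARD('n) - card T) s r) \<partial>lborel \<partial>lborel) = ennreal (2 * fact (card T) * fact (CARD('n) - card T) / fact (CARD('n) + 2))"
      using Gf_int_eq[of "card T" "CARD('n) - card T"] unfolding e .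
    show ?thesis unfolding main_nn_G[OF TU] using True G by (simp add: Pv_def)
  next
    case False
    then have "T \<subset> U" using TU by auto
    then have lt: "card T < card U" by (intro psubset_card_mono) auto
    have e: "card T + (card U - card T) + (CARD('n) - card U) + 2 = CARD('n) + 2" using lt cU by simp
    have m: "1 \<le> card U - card T" using lt by simp
    show ?thesis unfolding main_nn_G[OF TU] Gf_int_strict[OF m] e using False
      by (simp add: Pv_def)
  qed
qed

lemma phi_prod_has_integral:
  fixes T U :: "'n::finite set"
  assumes TU: "T \<subseteq> U"
  shows "((\<lambda>x. phi T x * phi U x) has_integral Pv CARD('n) (card T) (card U) (T = U)) (cbox 0 1)"
proof -
  have [measurable]: "cbox (0::real^'n) 1 \<in> sets borel" by simp
  have "((\<lambda>x. indicator (cbox 0 1) x * phi T x * phi U x) has_integral Pv CARD('n) (card T) (card U) (T = U)) UNIV"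
  proof (rule nn_integral_has_integral)
    show "(\<lambda>x. indicator (cbox 0 1) x * phi T x * phi U x) \<in> borel_measurable borel" by measurable
    show "\<And>x. 0 \<le> indicator (cbox 0 1) x * phi T x * phi U x" by (simp add: phi_nonneg)
    show "(\<integral>\<^sup>+x. ennreal (indicator (cbox 0 1) x * phi T x * phi U x) \<partial>lborel) = ennreal (Pv CARD('n) (card T) (card U) (T = U))"
      by (rule phi_prod_nn[OF TU])
    show "0 \<le> Pv CARD('n) (card T) (card U) (T = U)" by (rule Pv_nonneg)
  qed
  moreover have "(\<lambda>x. indicator (cbox 0 1) x * phi T x * phi U x) = (\<lambda>x. if x \<in> cbox 0 1 then phi T x * phi U x else 0)"
    by (auto simp: fun_eq_iff indicator_def)
  ultimately show ?thesis by (simp add: has_integral_restrict_UNIV)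
qed

definition PP :: "'n::finite set \<Rightarrow> 'n set \<Rightarrow> real" where
  "PP T U = (if T \<subseteq> U then Pv CARD('n) (card T) (card U) (T = U)
             else if U \<subseteq> T then Pv CARD('n) (card U) (card T) False else 0)"

lemma phi_zero: "Sset T x = {} \<Longrightarrow> phi T x = 0"
  by (simp add: phi_def)

lemma phi_prod_zero:
  assumes "\<not> T \<subseteq> U" "\<not> U \<subseteq> T"
  shows "phi T x * phi U x = 0"
proof (cases "Sset T x = {} \<or> Sset U x = {}")
  case True then show ?thesis using phi_zero by auto
next
  case False
  then obtain s r where s: "s \<in> Sset T x" and r: "r \<in> Sset U x" by blast
  have T: "T = {l. s \<le> x$l}" by (rule Sset_char[OF s])
  have U: "U = {l. r \<le> x$l}" by (rule Sset_char[OF r])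
  show ?thesis
  proof (cases "s \<le> r")
    case True then have "U \<subseteq> T" unfolding T U by auto
    then show ?thesis using assms by simp
  next
    case False then have "T \<subseteq> U" unfolding T U by auto
    then show ?thesis using assms by simp
  qed
qed

lemma phi_prod_int_all:
  fixes T U :: "'n::finite set"
  shows "((\<lambda>x. phi T x * phi U x) has_integral PP T U) (cbox 0 1)"
proof (cases "T \<subseteq> U")
  case True then show ?thesis using phi_prod_has_integral[OF True] by (simp add: PP_def)
next
  case F1: False
  show ?thesis
  proof (cases "U \<subseteq> T")
    case True
    have ne: "(U = T) = False" using F1 True by auto
    have "((\<lambda>x. phi U x * phi T x) has_integral Pv CARD('n) (card U) (card T) False) (cbox 0 1)"
      using phi_prod_has_integral[OF True] unfolding ne .
    then show ?thesis using F1 True by (simp add: PP_def mult.commute)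
  next
    case False
    have "(\<lambda>x. phi T x * phi U x) = (\<lambda>x. 0)" using phi_prod_zero[OF F1 False] by auto
    then show ?thesis using F1 False by (simp add: PP_def)
  qed
qed

lemma sum_PP:
  fixes T :: "'n::finite set"
  assumes u: "u \<le> CARD('n)"
  shows "(\<Sum>U\<in>{U::'n set. card U = u}. PP T U)
       = (if u = card T then 2 else 1) * fact (card T) * fact (CARD('n) - card T) / fact (CARD('n) + 2)"
proof -
  let ?N = "CARD('n)" and ?t = "card T"
  have tN: "?t \<le> ?N" by (rule card_mono) auto
  consider (eq) "u = ?t" | (gt) "?t < u" | (lt) "u < ?t" by linarith
  then show ?thesis
  proof cases
    case eq
    have "(\<Sum>U\<in>{U::'n set. card U = u}. PP T U) = (\<Sum>U\<in>{T}. PP T U)"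
    proof (rule sum.mono_neutral_right)
      show "\<forall>U\<in>{U::'n set. card U = u} - {T}. PP T U = 0"
      proof
        fix U :: "'n set" assume U: "U \<in> {U. card U = u} - {T}"
        then have cu: "card U = card T" "U \<noteq> T" using eq by auto
        have "\<not> T \<subseteq> U" using cu card_subset_eq[of U T] by auto
        moreover have "\<not> U \<subseteq> T" using cu card_subset_eq[of T U] by auto
        ultimately show "PP T U = 0" by (simp add: PP_def)
      qed
    qed (use eq in auto)
    also have "\<dots> = Pv ?N ?t ?t True" by (simp add: PP_def)
    finally show ?thesis using eq by (simp add: Pv_def)
  next
    case gt
    have "(\<Sum>U\<in>{U::'n set. card U = u}. PP T U) = (\<Sum>U\<in>{U. T \<subseteq> U \<and> card U = u}. PP T U)"
    proof (rule sum.mono_neutral_right)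
      show "\<forall>U\<in>{U::'n set. card U = u} - {U. T \<subseteq> U \<and> card U = u}. PP T U = 0"
      proof
        fix U :: "'n set" assume U: "U \<in> {U. card U = u} - {U. T \<subseteq> U \<and> card U = u}"
        then have "\<not> T \<subseteq> U" "card U = u" by auto
        moreover have "\<not> U \<subseteq> T" using card_mono[of T U] gt \<open>card U = u\<close> by auto
        ultimately show "PP T U = 0" by (simp add: PP_def)
      qed
    qed auto
    also have "\<dots> = (\<Sum>U\<in>{U. T \<subseteq> U \<and> card U = u}. Pv ?N ?t u False)"
    proof (rule sum.cong[OF refl])
      fix U assume U: "U \<in> {U. T \<subseteq> U \<and> card U = u}"
      then have "T \<noteq> U" using gt by auto
      then show "PP T U = Pv ?N ?t u False" using U by (simp add: PP_def)
    qed
    also have "\<dots> = real ((?N - ?t) choose (u - ?t)) * Pv ?N ?t u False"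
      using card_supersets[of T u] gt by simp
    also have "\<dots> = fact ?t * fact (?N - ?t) / fact (?N + 2)"
    proof -
      have k: "u - ?t \<le> ?N - ?t" using gt u by simp
      have e: "?N - ?t - (u - ?t) = ?N - u" using gt u by simp
      have "real ((?N - ?t) choose (u - ?t)) = fact (?N - ?t) / (fact (u - ?t) * fact (?N - u))"
        using binomial_fact[OF k] unfolding e .
      then show ?thesis by (simp add: Pv_def field_simps)
    qed
    finally show ?thesis using gt by simp
  next
    case lt
    have "(\<Sum>U\<in>{U::'n set. card U = u}. PP T U) = (\<Sum>U\<in>{U. U \<subseteq> T \<and> card U = u}. PP T U)"
    proof (rule sum.mono_neutral_right)
      show "\<forall>U\<in>{U::'n set. card U = u} - {U. U \<subseteq> T \<and> card U = u}. PP T U = 0"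
      proof
        fix U :: "'n set" assume U: "U \<in> {U. card U = u} - {U. U \<subseteq> T \<and> card U = u}"
        then have "\<not> U \<subseteq> T" "card U = u" by auto
        moreover have "\<not> T \<subseteq> U" using card_mono[of U T] lt \<open>card U = u\<close> by auto
        ultimately show "PP T U = 0" by (simp add: PP_def)
      qed
    qed auto
    also have "\<dots> = (\<Sum>U\<in>{U. U \<subseteq> T \<and> card U = u}. Pv ?N u ?t False)"
    proof (rule sum.cong[OF refl])
      fix U assume U: "U \<in> {U. U \<subseteq> T \<and> card U = u}"
      then have "\<not> T \<subseteq> U" using card_mono[of U T] lt by auto
      then show "PP T U = Pv ?N u ?t False" using U by (simp add: PP_def)
    qed
    also have "\<dots> = real (?t choose u) * Pv ?N u ?t False"
      using n_subsets[of T u] by simp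
    also have "\<dots> = fact ?t * fact (?N - ?t) / fact (?N + 2)"
    proof -
      have k: "u \<le> ?t" using lt by simp
      have "real (?t choose u) = fact ?t / (fact u * fact (?t - u))"
        by (rule binomial_fact[OF k])
      then show ?thesis by (simp add: Pv_def field_simps)
    qed
    finally show ?thesis using lt by simp
  qed
qed


definition yv :: "(nat \<Rightarrow> 'n::finite) \<Rightarrow> real^'n \<Rightarrow> nat \<Rightarrow> real" where
  "yv \<pi> x j = (if j = 0 then 0 else if j \<le> CARD('n) then x $ \<pi> j else 1)"

definition Aset :: "(nat \<Rightarrow> 'n::finite) \<Rightarrow> nat \<Rightarrow> 'n set" where
  "Aset \<pi> j = \<pi> ` {j..CARD('n)}"

lemma abel_identity:
  fixes w y :: "nat \<Rightarrow> real"
  shows "(\<Sum>j=1..Suc n. w j * (y j - y (j - 1))) = w (Suc n) * y (Suc n) - w 1 * y 0 + (\<Sum>m=1..n. (w m - w (Suc m)) * y m)"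
proof (induction n)
  case 0 then show ?case by (simp add: algebra_simps)
next
  case (Suc n)
  have "(\<Sum>j=1..Suc (Suc n). w j * (y j - y (j - 1))) = (\<Sum>j=1..Suc n. w j * (y j - y (j - 1))) + w (Suc (Suc n)) * (y (Suc (Suc n)) - y (Suc n))"
    by simp
  also have "(\<Sum>m=1..Suc n. (w m - w (Suc m)) * y m) = (\<Sum>m=1..n. (w m - w (Suc m)) * y m) + (w (Suc n) - w (Suc (Suc n))) * y (Suc n)"
    by simp
  ultimately show ?case using Suc by (simp add: algebra_simps)
qed

context
  fixes \<pi> :: "nat \<Rightarrow> 'n::finite" and x :: "real^'n"
  assumes bij: "bij_betw \<pi> {1..CARD('n)} UNIV" and reg: "x \<in> perm_region \<pi>"
begin

lemma inj_pi: "inj_on \<pi> {1..CARD('n)}" using bij by (simp add: bij_betw_def)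

lemma pi_surj: "\<exists>m\<in>{1..CARD('n)}. l = \<pi> m"
  using bij by (auto simp: bij_betw_def)

lemma y_strict: "1 \<le> i \<Longrightarrow> i < j \<Longrightarrow> j \<le> CARD('n) \<Longrightarrow> yv \<pi> x i < yv \<pi> x j"
  using reg by (auto simp: perm_region_def yv_def)

lemma x01: "0 \<le> x $ l \<and> x $ l \<le> 1"
proof -
  have "x \<in> cbox 0 1" using reg by (simp add: perm_region_def)
  then show ?thesis by (simp add: mem_box_cart)
qed

lemma y01: "0 \<le> yv \<pi> x j \<and> yv \<pi> x j \<le> 1"
  using x01 by (simp add: yv_def)

lemma y_mono: "i \<le> j \<Longrightarrow> yv \<pi> x i \<le> yv \<pi> x j"
proof -
  assume ij: "i \<le> j"
  show ?thesis
  proof (cases "i = 0 \<or> i = j \<or> CARD('n) < j")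
    case True
    then show ?thesis using y01[of j] y01[of i] by (auto simp: yv_def)
  next
    case False
    then have "1 \<le> i" "i < j" "j \<le> CARD('n)" using ij by auto
    then show ?thesis using y_strict by (meson less_imp_le)
  qed
qed

lemma y_pi: "m \<in> {1..CARD('n)} \<Longrightarrow> yv \<pi> x m = x $ \<pi> m"
  by (simp add: yv_def)

lemma mem_Aset: "m \<in> {1..CARD('n)} \<Longrightarrow> \<pi> m \<in> Aset \<pi> j \<longleftrightarrow> j \<le> m"
proof -
  assume m: "m \<in> {1..CARD('n)}"
  show ?thesis
  proof
    assume mA: "\<pi> m \<in> Aset \<pi> j"
    show "j \<le> m"
    proof (cases "j = 0")
      case True then show ?thesis by simp
    next
      case False
      obtain m' where m': "m' \<in> {j..CARD('n)}" "\<pi> m = \<pi> m'" using mA by (auto simp: Aset_def)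
      have "m' \<in> {1..CARD('n)}" using m' False by auto
      then have "m = m'" using inj_pi m m'(2) by (auto dest: inj_onD)
      then show "j \<le> m" using m' by simp
    qed
  next
    assume "j \<le> m" then show "\<pi> m \<in> Aset \<pi> j" using m by (auto simp: Aset_def)
  qed
qed

lemma card_Aset: "1 \<le> j \<Longrightarrow> card (Aset \<pi> j) = CARD('n) + 1 - j"
proof -
  assume j: "1 \<le> j"
  have "inj_on \<pi> {j..CARD('n)}" using inj_pi by (rule inj_on_subset) (use j in auto)
  then show ?thesis by (simp add: Aset_def card_image)
qed

lemma inj_Aset: "inj_on (Aset \<pi>) {1..CARD('n)+1}"
proof (rule inj_onI)
  fix i j assume "i \<in> {1..CARD('n)+1}" "j \<in> {1..CARD('n)+1}" "Aset \<pi> i = Aset \<pi> j"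
  then show "i = j" using card_Aset[of i] card_Aset[of j] by auto
qed

lemma Sset_Aset:
  assumes j: "j \<in> {1..CARD('n)+1}"
  shows "Sset (Aset \<pi> j) x = {yv \<pi> x (j - 1)<..yv \<pi> x j}"
proof (intro set_eqI iffI)
  fix s assume s: "s \<in> Sset (Aset \<pi> j) x"
  then have s1: "0 < s" "s \<le> 1" "\<And>l. l \<notin> Aset \<pi> j \<Longrightarrow> x$l < s" "\<And>l. l \<in> Aset \<pi> j \<Longrightarrow> s \<le> x$l"
    by (auto simp: Sset_def)
  have "yv \<pi> x (j - 1) < s"
  proof (cases "j = 1")
    case True then show ?thesis using s1 by (simp add: yv_def)
  next
    case False
    then have jm: "j - 1 \<in> {1..CARD('n)}" using j by auto
    then have "\<pi> (j - 1) \<notin> Aset \<pi> j" using mem_Aset[OF jm] False j by auto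
    then show ?thesis using s1(3) y_pi[OF jm] by simp
  qed
  moreover have "s \<le> yv \<pi> x j"
  proof (cases "j = CARD('n) + 1")
    case True then show ?thesis using s1 by (simp add: yv_def)
  next
    case False
    then have jm: "j \<in> {1..CARD('n)}" using j by auto
    then have "\<pi> j \<in> Aset \<pi> j" using mem_Aset[OF jm] by auto
    then show ?thesis using s1(4) y_pi[OF jm] by simp
  qed
  ultimately show "s \<in> {yv \<pi> x (j - 1)<..yv \<pi> x j}" by simp
next
  fix s assume s: "s \<in> {yv \<pi> x (j - 1)<..yv \<pi> x j}"
  then have s1: "yv \<pi> x (j - 1) < s" "s \<le> yv \<pi> x j" by auto
  have "0 < s" using s1 y01[of "j - 1"] by linarith
  moreover have "s \<le> 1" using s1 y01[of j] by linarith
  moreover have "x$l < s" if "l \<notin> Aset \<pi> j" for l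
  proof -
    obtain m where m: "m \<in> {1..CARD('n)}" "l = \<pi> m" using pi_surj by blast
    then have "m < j" using that mem_Aset[OF m(1)] by auto
    then have "yv \<pi> x m \<le> yv \<pi> x (j - 1)" by (intro y_mono) simp
    then show ?thesis using s1 y_pi[OF m(1)] m(2) by simp
  qed
  moreover have "s \<le> x$l" if "l \<in> Aset \<pi> j" for l
  proof -
    obtain m where m: "m \<in> {1..CARD('n)}" "l = \<pi> m" using pi_surj by blast
    then have "j \<le> m" using that mem_Aset[OF m(1)] by auto
    then have "yv \<pi> x j \<le> yv \<pi> x m" by (intro y_mono)
    then show ?thesis using s1 y_pi[OF m(1)] m(2) by simp
  qed
  ultimately show "s \<in> Sset (Aset \<pi> j) x" by (simp add: Sset_def)
qed

lemma phi_Aset: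
  assumes j: "j \<in> {1..CARD('n)+1}"
  shows "phi (Aset \<pi> j) x = yv \<pi> x j - yv \<pi> x (j - 1)"
proof -
  have "yv \<pi> x (j - 1) \<le> yv \<pi> x j" by (intro y_mono) simp
  then show ?thesis unfolding phi_def Sset_Aset[OF j] by simp
qed

lemma phi_other:
  assumes T: "T \<notin> Aset \<pi> ` {1..CARD('n)+1}"
  shows "phi T x = 0"
proof (rule ccontr)
  assume "phi T x \<noteq> 0"
  then have "Sset T x \<noteq> {}" using phi_zero by blast
  then obtain s where s: "s \<in> Sset T x" by blast
  then have Ts: "T = {l. s \<le> x$l}" by (rule Sset_char)
  have s1: "s \<le> 1" using s by (simp add: Sset_def)
  define j where "j = (LEAST m. 1 \<le> m \<and> s \<le> yv \<pi> x m)"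
  have ex: "1 \<le> CARD('n) + 1 \<and> s \<le> yv \<pi> x (CARD('n) + 1)" using s1 by (simp add: yv_def)
  have jP: "1 \<le> j \<and> s \<le> yv \<pi> x j" unfolding j_def by (rule LeastI[of _ "CARD('n) + 1"]) (rule ex)
  have jle: "j \<le> CARD('n) + 1" unfolding j_def by (rule Least_le) (rule ex)
  have "T = Aset \<pi> j"
  proof (intro set_eqI iffI)
    fix l assume "l \<in> T"
    then have sl: "s \<le> x$l" using Ts by simp
    obtain m where m: "m \<in> {1..CARD('n)}" "l = \<pi> m" using pi_surj by blast
    then have "1 \<le> m \<and> s \<le> yv \<pi> x m" using sl y_pi[OF m(1)] by simp
    then have "j \<le> m" unfolding j_def by (rule Least_le)
    then show "l \<in> Aset \<pi> j" using mem_Aset[OF m(1)] m(2) by simp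
  next
    fix l assume l: "l \<in> Aset \<pi> j"
    obtain m where m: "m \<in> {1..CARD('n)}" "l = \<pi> m" using pi_surj by blast
    then have "j \<le> m" using l mem_Aset[OF m(1)] by simp
    then have "yv \<pi> x j \<le> yv \<pi> x m" by (rule y_mono)
    then show "l \<in> T" using Ts jP y_pi[OF m(1)] m(2) by simp
  qed
  then show False using T jP jle by auto
qed

lemma sum_c_phi:
  fixes c :: "'n set \<Rightarrow> real"
  shows "(\<Sum>T\<in>UNIV. c T * phi T x) = (\<Sum>j=1..CARD('n)+1. c (Aset \<pi> j) * (yv \<pi> x j - yv \<pi> x (j - 1)))"
proof -
  have "(\<Sum>T\<in>UNIV. c T * phi T x) = (\<Sum>T\<in>Aset \<pi> ` {1..CARD('n)+1}. c T * phi T x)"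
    by (rule sum.mono_neutral_right) (auto simp: phi_other)
  also have "\<dots> = (\<Sum>j=1..CARD('n)+1. c (Aset \<pi> j) * phi (Aset \<pi> j) x)"
    by (rule sum.reindex[OF inj_Aset, unfolded comp_def])
  also have "\<dots> = (\<Sum>j=1..CARD('n)+1. c (Aset \<pi> j) * (yv \<pi> x j - yv \<pi> x (j - 1)))"
    by (rule sum.cong[OF refl]) (simp add: phi_Aset)
  finally show ?thesis .
qed

lemma sum_phi_card:
  assumes u: "u \<le> CARD('n)"
  shows "(\<Sum>U\<in>{U::'n set. card U = u}. phi U x) = yv \<pi> x (CARD('n) + 1 - u) - yv \<pi> x (CARD('n) - u)"
proof -
  let ?j = "CARD('n) + 1 - u"
  have j: "?j \<in> {1..CARD('n)+1}" using u by auto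
  have cj: "card (Aset \<pi> ?j) = u" using card_Aset[of ?j] u by simp
  have "(\<Sum>U\<in>{U::'n set. card U = u}. phi U x) = (\<Sum>U\<in>{Aset \<pi> ?j}. phi U x)"
  proof (rule sum.mono_neutral_right)
    show "\<forall>U\<in>{U::'n set. card U = u} - {Aset \<pi> ?j}. phi U x = 0"
    proof
      fix U :: "'n set" assume U: "U \<in> {U. card U = u} - {Aset \<pi> ?j}"
      have "U \<notin> Aset \<pi> ` {1..CARD('n)+1}"
      proof
        assume "U \<in> Aset \<pi> ` {1..CARD('n)+1}"
        then obtain i where i: "i \<in> {1..CARD('n)+1}" "U = Aset \<pi> i" by blast
        then have "card U = CARD('n) + 1 - i" using card_Aset by simp
        then have "i = ?j" using U i by auto
        then show False using U i by simp
      qed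
      then show "phi U x = 0" by (rule phi_other)
    qed
  qed (use cj in auto)
  also have "\<dots> = yv \<pi> x ?j - yv \<pi> x (?j - 1)" using phi_Aset[OF j] by simp
  also have "?j - 1 = CARD('n) - u" by simp
  finally show ?thesis .
qed

lemma order_stat_y: "order_stat x k = yv \<pi> x k"
proof -
  let ?N = "CARD('n)"
  define L where "L = map (\<lambda>m. x $ \<pi> m) [1..<?N+1]"
  have "mset L = image_mset (\<lambda>m. x $ \<pi> m) (mset_set {1..<?N+1})"
    by (simp only: L_def mset_map mset_upt)
  also have "\<dots> = image_mset (\<lambda>i. x $ i) (image_mset \<pi> (mset_set {1..<?N+1}))"
    by (simp add: multiset.map_comp o_def)
  also have "image_mset \<pi> (mset_set {1..<?N+1}) = mset_set (\<pi> ` {1..<?N+1})"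
    by (rule image_mset_mset_set) (use inj_pi in \<open>simp add: atLeastLessThanSuc_atLeastAtMost\<close>)
  also have "\<pi> ` {1..<?N+1} = UNIV" using bij by (simp add: bij_betw_def atLeastLessThanSuc_atLeastAtMost)
  finally have mL: "image_mset (\<lambda>i. x $ i) (mset_set UNIV) = mset L" by simp
  have len: "length L = ?N" by (simp add: L_def)
  have nth: "i < ?N \<Longrightarrow> L ! i = x $ \<pi> (Suc i)" for i by (simp add: L_def nth_map del: upt_Suc)
  have "sorted L"
  proof (rule sorted_iff_nth_mono_less[THEN iffD2], intro allI impI)
    fix i j assume ij: "i < j" "j < length L"
    then have "yv \<pi> x (Suc i) < yv \<pi> x (Suc j)" using len by (intro y_strict) auto
    then show "L ! i \<le> L ! j" using ij len nth by (simp add: yv_def)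
  qed
  then have sL: "sorted_list_of_multiset (image_mset (\<lambda>i. x $ i) (mset_set UNIV)) = L"
    unfolding mL by (simp add: sorted_sort_id)
  show ?thesis
  proof (cases "k = 0 \<or> ?N < k")
    case True then show ?thesis by (auto simp: order_stat_def yv_def)
  next
    case False
    then have k: "1 \<le> k" "k \<le> ?N" by auto
    then have "L ! (k - 1) = x $ \<pi> k" using nth[of "k - 1"] by simp
    then show ?thesis using k by (simp add: order_stat_def yv_def sL)
  qed
qed

lemma lovasz_on_region:
  assumes f: "lovasz_extension f"
  shows "f x = (\<Sum>j=1..CARD('n)+1. vf f (Aset \<pi> j) * (yv \<pi> x j - yv \<pi> x (j - 1)))"
proof -
  let ?N = "CARD('n)"
  obtain c a where ca: "\<forall>i\<in>{1..?N+1}. c + a \<bullet> charvec (\<pi> ` {i..?N}) = f (charvec (\<pi> ` {i..?N}))"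
      and fx: "\<forall>x\<in>perm_region \<pi>. f x = c + a \<bullet> x"
    using f bij unfolding lovasz_extension_def by blast
  define w where "w i = vf f (Aset \<pi> i)" for i
  define Sa where "Sa i = (\<Sum>m=i..?N. a $ \<pi> m)" for i
  have inner_char: "a \<bullet> charvec S = (\<Sum>l\<in>S. a $ l)" for S
    by (simp add: inner_vec_def charvec_def if_distrib sum.If_cases)
  have SA: "a \<bullet> charvec (\<pi> ` {i..?N}) = Sa i" if "1 \<le> i" for i
  proof -
    have "inj_on \<pi> {i..?N}" using inj_pi by (rule inj_on_subset) (use that in auto)
    then show ?thesis unfolding inner_char Sa_def by (simp add: sum.reindex)
  qed
  have cw: "c + Sa i = w i" if "i \<in> {1..?N+1}" for i
  proof -
    have i1: "1 \<le> i" using that by simp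
    show ?thesis using ca[rule_format, OF that] SA[OF i1] by (simp add: w_def vf_def Aset_def)
  qed
  have c: "c = w (?N + 1)" using cw[of "?N+1"] by (simp add: Sa_def)
  have am: "a $ \<pi> m = w m - w (Suc m)" if "m \<in> {1..?N}" for m
  proof -
    have "Sa m = a $ \<pi> m + Sa (Suc m)" using that by (simp add: Sa_def sum.atLeast_Suc_atMost)
    then show ?thesis using cw[of m] cw[of "Suc m"] that by simp
  qed
  have "a \<bullet> x = (\<Sum>l\<in>UNIV. a $ l * x $ l)" by (simp add: inner_vec_def)
  also have "\<dots> = (\<Sum>m=1..?N. a $ \<pi> m * x $ \<pi> m)"
  proof -
    have "UNIV = \<pi> ` {1..?N}" using bij by (simp add: bij_betw_def)
    then show ?thesis using sum.reindex[OF inj_pi, of "\<lambda>l. a $ l * x $ l"] by simp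
  qed
  also have "\<dots> = (\<Sum>m=1..?N. (w m - w (Suc m)) * yv \<pi> x m)"
    by (rule sum.cong[OF refl]) (simp add: am y_pi)
  finally have ax: "a \<bullet> x = (\<Sum>m=1..?N. (w m - w (Suc m)) * yv \<pi> x m)" .
  have "f x = c + a \<bullet> x" using fx reg by blast
  also have "\<dots> = w (Suc ?N) * yv \<pi> x (Suc ?N) - w 1 * yv \<pi> x 0 + (\<Sum>m=1..?N. (w m - w (Suc m)) * yv \<pi> x m)"
    using c ax by (simp add: yv_def)
  also have "\<dots> = (\<Sum>j=1..Suc ?N. w j * (yv \<pi> x j - yv \<pi> x (j - 1)))"
    by (rule abel_identity[symmetric])
  finally show ?thesis by (simp add: w_def)
qed

end


lemma exists_perm:
  fixes x :: "real^'n::finite"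
  assumes x: "x \<in> cbox 0 1" and inj: "inj (\<lambda>i. x$i)"
  shows "\<exists>\<pi>. bij_betw \<pi> {1..CARD('n)} UNIV \<and> x \<in> perm_region \<pi>"
proof -
  let ?g = "\<lambda>i. x$i"
  let ?N = "CARD('n)"
  define xs where "xs = sorted_list_of_set (range ?g)"
  have len: "length xs = ?N" using inj by (simp add: xs_def card_image)
  have sw: "sorted_wrt (<) xs" unfolding xs_def by (rule strict_sorted_list_of_set)
  have setxs: "set xs = range ?g" by (simp add: xs_def)
  define \<pi> where "\<pi> m = inv ?g (xs ! (m - 1))" for m
  have gpi: "x $ \<pi> m = xs ! (m - 1)" if "m \<in> {1..?N}" for m
  proof -
    have "xs ! (m - 1) \<in> range ?g" using that len setxs nth_mem[of "m - 1" xs] by auto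
    then show ?thesis unfolding \<pi>_def by (rule f_inv_into_f)
  qed
  have injpi: "inj_on \<pi> {1..?N}"
  proof (rule inj_onI)
    fix i j assume i: "i \<in> {1..?N}" and j: "j \<in> {1..?N}" and e: "\<pi> i = \<pi> j"
    then have "xs ! (i - 1) = xs ! (j - 1)" using gpi[OF i] gpi[OF j] by metis
    moreover have "distinct xs" using sw by (simp add: strict_sorted_iff)
    moreover have "i - 1 < length xs" "j - 1 < length xs" using i j len by auto
    ultimately have "i - 1 = j - 1" using nth_eq_iff_index_eq[of xs "i - 1" "j - 1"] by blast
    then show "i = j" using i j by (cases i; cases j) auto
  qed
  have img: "\<pi> ` {1..?N} = UNIV"
  proof -
    have "card (\<pi> ` {1..?N}) = ?N" using injpi by (simp add: card_image)
    then show ?thesis by (intro card_subset_eq) auto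
  qed
  have "bij_betw \<pi> {1..?N} UNIV" using injpi img by (simp add: bij_betw_def)
  moreover have "x \<in> perm_region \<pi>"
  proof -
    have "x $ \<pi> i < x $ \<pi> j" if "1 \<le> i" "i < j" "j \<le> ?N" for i j
    proof -
      have "xs ! (i - 1) < xs ! (j - 1)" using sorted_wrt_nth_less[OF sw, of "i - 1" "j - 1"] that len by simp
      then show ?thesis using gpi[of i] gpi[of j] that by simp
    qed
    then show ?thesis using x by (simp add: perm_region_def)
  qed
  ultimately show ?thesis by blast
qed

definition tieset :: "(real^'n::finite) set" where
  "tieset = \<Union> ((\<lambda>(i, j). {x. x$i = x$j}) ` {(i, j). i \<noteq> j})"

lemma negligible_tieset: "negligible (tieset :: (real^'n::finite) set)"
  unfolding tieset_def
proof (rule negligible_Union)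
  show "finite ((\<lambda>(i, j). {x::real^'n. x$i = x$j}) ` {(i, j). i \<noteq> j})" by simp
next
  fix S assume "S \<in> (\<lambda>(i, j). {x::real^'n. x$i = x$j}) ` {(i, j). i \<noteq> j}"
  then obtain i j :: 'n where ij: "i \<noteq> j" and S: "S = {x. x$i = x$j}" by auto
  have "S = {x. (axis i 1 - axis j 1) \<bullet> x = 0}" unfolding S by (auto simp: inner_diff_left inner_axis')
  moreover have "axis i (1::real) - axis j 1 \<noteq> 0"
  proof
    assume "axis i (1::real) - axis j 1 = 0"
    then have "(axis i (1::real) - axis j 1) $ i = 0" by simp
    then show False using ij by (simp add: axis_def)
  qed
  moreover have "negligible {x::real^'n. (axis i 1 - axis j 1) \<bullet> x = 0}"
    by (rule negligible_hyperplane) (use \<open>axis i (1::real) - axis j 1 \<noteq> 0\<close> in blast)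
  ultimately show "negligible S" by simp
qed

lemma not_tie_inj: "x \<notin> tieset \<Longrightarrow> inj (\<lambda>i. (x::real^'n::finite)$i)"
  unfolding tieset_def by (auto simp: inj_def)

lemma influence_formula:
  fixes f :: "real^'n::finite \<Rightarrow> real"
  assumes f: "lovasz_extension f" and k: "k \<in> {1..CARD('n)}"
  shows "influence f k = vbar f (CARD('n) + 1 - k) - vbar f (CARD('n) - k)"
proof -
  let ?N = "CARD('n)"
  let ?U1 = "{U::'n set. card U = ?N - k}" and ?U2 = "{U::'n set. card U = ?N - k + 1}"
  define H where "H x = (\<Sum>T\<in>UNIV. vf f T * ((\<Sum>U\<in>?U1. phi T x * phi U x) - (\<Sum>U\<in>?U2. phi T x * phi U x)))" for x
  define I where "I = (\<Sum>T\<in>UNIV. vf f T * ((\<Sum>U\<in>?U1. PP T U) - (\<Sum>U\<in>?U2. PP T U)))"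
  have HI: "(H has_integral I) (cbox 0 1)"
    unfolding H_def I_def
    by (intro has_integral_sum has_integral_mult_right has_integral_diff phi_prod_int_all finite)
  define g where "g x = order_stat x (k + 1) - 2 * order_stat x k + order_stat x (k - 1)" for x :: "real^'n"
  have eq: "f x * g x = H x" if "x \<in> cbox 0 1 - tieset" for x
  proof -
    have xc: "x \<in> cbox 0 1" and xt: "x \<notin> tieset" using that by auto
    obtain \<pi> where bij: "bij_betw \<pi> {1..?N} UNIV" and reg: "x \<in> perm_region \<pi>"
      using exists_perm[OF xc not_tie_inj[OF xt]] by blast
    have fx: "f x = (\<Sum>T\<in>UNIV. vf f T * phi T x)"
      using lovasz_on_region[OF bij reg f] sum_c_phi[OF bij reg, of "vf f"] by simp
    have u1: "?N - k \<le> ?N" by simp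
    have u2: "?N - k + 1 \<le> ?N" using k by auto
    have s1: "(\<Sum>U\<in>?U1. phi U x) = yv \<pi> x (k + 1) - yv \<pi> x k"
      using sum_phi_card[OF bij reg u1] k by (simp add: Suc_diff_le)
    have s2: "(\<Sum>U\<in>?U2. phi U x) = yv \<pi> x k - yv \<pi> x (k - 1)"
    proof -
      have a: "?N + 1 - (?N - k + 1) = k" "?N - (?N - k + 1) = k - 1" using k by auto
      show ?thesis using sum_phi_card[OF bij reg u2] unfolding a .
    qed
    have gx: "g x = (\<Sum>U\<in>?U1. phi U x) - (\<Sum>U\<in>?U2. phi U x)"
      unfolding g_def s1 s2 order_stat_y[OF bij reg] by simp
    show ?thesis unfolding fx gx H_def
      by (simp add: sum_distrib_right sum_distrib_left right_diff_distrib sum_subtractf mult.assoc)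
         (simp only: sum.swap[where A="UNIV::'n set set"])
  qed
  have fg: "((\<lambda>x. f x * g x) has_integral I) (cbox 0 1)"
    by (rule has_integral_spike[OF negligible_tieset _ HI]) (use eq in auto)
  have infl: "influence f k = - (real ?N + 1) * (real ?N + 2) * I"
    unfolding influence_def using fg by (simp add: integral_unique g_def)
  have u1: "?N - k \<le> ?N" by simp
  have u2: "?N - k + 1 \<le> ?N" using k by auto
  define c where "c t = ((if ?N - k = t then 2 else 1) - (if ?N - k + 1 = t then 2 else 1)) * fact t * fact (?N - t) / (fact (?N + 2) :: real)" for t
  have I1: "I = (\<Sum>T\<in>UNIV. vf f T * c (card T))"
    unfolding I_def
  proof (rule sum.cong[OF refl])
    fix T :: "'n set"
    show "vf f T * ((\<Sum>U\<in>?U1. PP T U) - (\<Sum>U\<in>?U2. PP T U)) = vf f T * c (card T)"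
      unfolding sum_PP[OF u1] sum_PP[OF u2] c_def by (simp add: diff_divide_distrib left_diff_distrib)
  qed
  have c0: "c t = 0" if "t \<noteq> ?N - k" "t \<noteq> ?N - k + 1" for t using that by (auto simp: c_def)
  have c1: "c (?N - k) = fact (?N - k) * fact k / fact (?N + 2)" using k by (simp add: c_def)
  have c2: "c (?N - k + 1) = - (fact (?N - k + 1) * fact (k - 1) / fact (?N + 2))"
  proof -
    have "?N - (?N - k + 1) = k - 1" using k by auto
    then show ?thesis by (simp add: c_def)
  qed
  have I2: "I = (\<Sum>T\<in>?U1. vf f T) * c (?N - k) + (\<Sum>T\<in>?U2. vf f T) * c (?N - k + 1)"
  proof -
    have "I = (\<Sum>T\<in>?U1 \<union> ?U2. vf f T * c (card T))"
      unfolding I1 by (rule sum.mono_neutral_right) (auto simp: c0)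
    also have "\<dots> = (\<Sum>T\<in>?U1. vf f T * c (card T)) + (\<Sum>T\<in>?U2. vf f T * c (card T))"
      by (rule sum.union_disjoint) auto
    also have "(\<Sum>T\<in>?U1. vf f T * c (card T)) = (\<Sum>T\<in>?U1. vf f T) * c (?N - k)"
      by (simp add: sum_distrib_right)
    also have "(\<Sum>T\<in>?U2. vf f T * c (card T)) = (\<Sum>T\<in>?U2. vf f T) * c (?N - k + 1)"
      by (simp add: sum_distrib_right)
    finally show ?thesis .
  qed
  have vb: "(\<Sum>T\<in>{T::'n set. card T = s}. vf f T) * (fact s * fact (?N - s)) = vbar f s * fact ?N" if "s \<le> ?N" for s
  proof -
    have b: "real (?N choose s) = fact ?N / (fact s * fact (?N - s))" by (rule binomial_fact[OF that])
    have nz: "(fact s * fact (?N - s) :: real) \<noteq> 0" by simp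
    show ?thesis unfolding vbar_def b using nz by (simp add: field_simps)
  qed
  have vb1: "(\<Sum>T\<in>?U1. vf f T) * (fact (?N - k) * fact k) = vbar f (?N - k) * fact ?N"
    using vb[OF u1] k by simp
  have vb2: "(\<Sum>T\<in>?U2. vf f T) * (fact (?N - k + 1) * fact (k - 1)) = vbar f (?N - k + 1) * fact ?N"
  proof -
    have "?N - (?N - k + 1) = k - 1" using k by auto
    then show ?thesis using vb[OF u2] by simp
  qed
  have I3: "I = (vbar f (?N - k) - vbar f (?N - k + 1)) * fact ?N / fact (?N + 2)"
  proof -
    have gen: "\<And>A B a b F::real. A * (a / F) + B * (- (b / F)) = (A * a - B * b) / F"
      by (simp add: diff_divide_distrib)
    show ?thesis unfolding I2 c1 c2 gen vb1 vb2 left_diff_distrib ..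
  qed
  have F: "(fact (?N + 2) :: real) = (real ?N + 2) * (real ?N + 1) * fact ?N"
    by (simp add: algebra_simps)
  have e: "?N + 1 - k = ?N - k + 1" using k by auto
  have gen2: "\<And>p q V1 V2 c::real. p \<noteq> 0 \<Longrightarrow> q \<noteq> 0 \<Longrightarrow> c \<noteq> 0 \<Longrightarrow> - p * q * ((V1 - V2) * c / (q * p * c)) = V2 - V1"
    by (simp add: field_simps)
  have p: "real ?N + 1 \<noteq> 0" and q: "real ?N + 2 \<noteq> 0" and cN: "(fact ?N :: real) \<noteq> 0" by simp_all
  show ?thesis unfolding infl I3 F e by (rule gen2[OF p q cN])
qed


theorem proposition24:
  fixes f :: "real^'n::finite \<Rightarrow> real"
  assumes "lovasz_extension f"
  shows "((\<forall>k\<in>{1..CARD('n)}. influence f k = influence f 1)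
           \<longleftrightarrow> (\<exists>a d. \<forall>s\<le>CARD('n). vbar f s = a + d * real s))
       \<and> ((\<exists>a d. \<forall>s\<le>CARD('n). vbar f s = a + d * real s)
           \<longleftrightarrow> (\<forall>s\<in>{2..CARD('n)}. mbar f s = 0))"
proof -
  let ?N = "CARD('n)"
  have IF: "influence f k = vbar f (Suc (?N - k)) - vbar f (?N - k)" if "k \<in> {1..?N}" for k
  proof -
    have "?N + 1 - k = Suc (?N - k)" using that by auto
    then show ?thesis using influence_formula[OF assms that] by simp
  qed
  have N1: "1 \<le> ?N" by (simp add: Suc_le_eq)
  have ab: "(\<forall>k\<in>{1..?N}. influence f k = influence f 1) \<longleftrightarrow> (\<exists>a d. \<forall>s\<le>?N. vbar f s = a + d * real s)"
  proof
    assume H: "\<forall>k\<in>{1..?N}. influence f k = influence f 1"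
    define D where "D = influence f 1"
    have step: "vbar f (Suc s) - vbar f s = D" if "s < ?N" for s
    proof -
      have k: "?N - s \<in> {1..?N}" using that by auto
      have e: "?N - (?N - s) = s" using that by auto
      show ?thesis using H[rule_format, OF k] IF[OF k] unfolding e D_def by simp
    qed
    have "vbar f s = vbar f 0 + D * real s" if "s \<le> ?N" for s
      using that
    proof (induction s)
      case 0 then show ?case by simp
    next
      case (Suc s)
      then have "vbar f s = vbar f 0 + D * real s" by simp
      moreover have "vbar f (Suc s) - vbar f s = D" using Suc.prems by (intro step) simp
      ultimately show ?case by (simp add: algebra_simps)
    qed
    then show "\<exists>a d. \<forall>s\<le>?N. vbar f s = a + d * real s" by blast
  next
    assume "\<exists>a d. \<forall>s\<le>?N. vbar f s = a + d * real s"
    then obtain a d where ad: "\<And>s. s \<le> ?N \<Longrightarrow> vbar f s = a + d * real s" by blast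
    have Id: "influence f k = d" if "k \<in> {1..?N}" for k
    proof -
      have "Suc (?N - k) \<le> ?N" "?N - k \<le> ?N" using that by auto
      then show ?thesis using IF[OF that] ad by (simp add: algebra_simps)
    qed
    have k1: "1 \<in> {1..?N}" using N1 by simp
    show "\<forall>k\<in>{1..?N}. influence f k = influence f 1" using Id Id[OF k1] by simp
  qed
  show ?thesis using ab part_bc[of f] by blast
qed


end
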